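(* There exist numerical constants $c_1,c_2,c_3>0$ such that, in the Gaussian $G$-latent setting below with $m\ge2$ and $\log(p)\le c_1n$, with probability at least $1-c_3/p$ the estimator $\check\Gamma$ defined below satisfies $$|\check\Gamma-\Gamma|_V\le2|\check\Gamma-\Gamma|_\infty\le c_2|\Gamma|_\infty^{1/2}|\Sigma|_\infty^{1/2}\sqrt{\frac{\log p}{n}}.$$
   Context: Setting: $G=\{G_1,\dots,G_K\}$ partition of $[p]$ into nonempty groups, $k(a)$ the index with $a\in G_{k(a)}$, $m=\min_k|G_k|$. $X_a=Z_{k(a)}+E_a$ with $Z\sim N(0,C)$ in $\mathbb{R}^K$ and $E\sim N(0,\Gamma)$ in $\mathbb{R}^p$ independent, $\Gamma$ diagonal with $\Gamma_{aa}=\gamma_{k(a)}>0$; $\Sigma=ACA^t+\Gamma$, $A_{ak}=1_{\{a\in G_k\}}$. Data: $n$ i.i.d. copies of $X$ as rows of the $n\times p$ matrix $\mathbf{X}$, columns $\mathbf{X}_{:a}$. Estimator: $ne(a)\in\arg\min_{b\in[p]\setminus\{a\}}\max_{c\neq a,b}\big|\langle\mathbf{X}_{:a}-\mathbf{X}_{:b},\mathbf{X}_{:c}/|\mathbf{X}_{:c}|_2\rangle\big|$ and $\check\Gamma$ is diagonal with $\check\Gamma_{aa}=\frac1n\langle\mathbf{X}_{:a}-\mathbf{X}_{:ne(a)},\mathbf{X}_{:a}\rangle$. For diagonal $D$, $|D|_V=\max_aD_{aa}-\min_aD_{aa}$; $|M|_\infty$ is the largest absolute entry. *)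

theory Defs
  imports "HOL-Probability.Probability"
begin

definition std_gaussian :: "real measure" where
  "std_gaussian = density lborel (\<lambda>x. ennreal (std_normal_density x))"

text \<open>N(0,1) coordinates W(i,j), i < n (sample index),
  j < K + p; coordinates j < K drive the latent vector Z of sample i, coordinate K + a drives
  the noise E_a of sample i.\<close>
definition data_space :: "nat \<Rightarrow> nat \<Rightarrow> nat \<Rightarrow> (nat \<times> nat \<Rightarrow> real) measure" where
  "data_space n K p = PiM ({..<n} \<times> {..<K + p}) (\<lambda>_. std_gaussian)"

text \<open>Data matrix entry X i a (row i, column a): X_a = Z_{k(a)} + E_a with Z = L W (so
  Z ~ N(0, L L^t)) and E_a = sqrt(gamma_{k(a)}) V_a.\<close>
definition Xdat :: "(nat \<Rightarrow> nat \<Rightarrow> real) \<Rightarrow> (nat \<Rightarrow> nat) \<Rightarrow> (nat \<Rightarrow> real) \<Rightarrow> nat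
    \<Rightarrow> (nat \<times> nat \<Rightarrow> real) \<Rightarrow> nat \<Rightarrow> nat \<Rightarrow> real" where
  "Xdat L grp \<gamma> K \<omega> i a =
     (\<Sum>j<K. L (grp a) j * \<omega> (i, j)) + sqrt (\<gamma> (grp a)) * \<omega> (i, K + a)"

definition col_norm :: "nat \<Rightarrow> (nat \<Rightarrow> nat \<Rightarrow> real) \<Rightarrow> nat \<Rightarrow> real" where
  "col_norm n X c = sqrt (\<Sum>i<n. (X i c)\<^sup>2)"

text \<open>Criterion max_{c \<noteq> a,b} |<X_a - X_b, X_c/|X_c|_2>| (the max over the empty set,
  occurring only when p = 2, is taken to be 0; this does not affect the argmin).\<close>
definition ne_crit :: "nat \<Rightarrow> nat \<Rightarrow> (nat \<Rightarrow> nat \<Rightarrow> real) \<Rightarrow> nat \<Rightarrow> nat \<Rightarrow> real" where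
  "ne_crit n p X a b = Max (insert 0
     ((\<lambda>c. \<bar>(\<Sum>i<n. (X i a - X i b) * X i c) / col_norm n X c\<bar>) ` {c. c < p \<and> c \<noteq> a \<and> c \<noteq> b}))"

definition is_ne :: "nat \<Rightarrow> nat \<Rightarrow> (nat \<Rightarrow> nat \<Rightarrow> real) \<Rightarrow> (nat \<Rightarrow> nat) \<Rightarrow> bool" where
  "is_ne n p X ne \<longleftrightarrow> (\<forall>a<p. ne a < p \<and> ne a \<noteq> a \<and>
      (\<forall>b<p. b \<noteq> a \<longrightarrow> ne_crit n p X a (ne a) \<le> ne_crit n p X a b))"

definition Gamma_check :: "nat \<Rightarrow> (nat \<Rightarrow> nat \<Rightarrow> real) \<Rightarrow> (nat \<Rightarrow> nat) \<Rightarrow> nat \<Rightarrow> real" where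
  "Gamma_check n X ne a = (1 / real n) * (\<Sum>i<n. (X i a - X i (ne a)) * X i a)"

definition diag_V :: "nat \<Rightarrow> (nat \<Rightarrow> real) \<Rightarrow> real" where
  "diag_V p d = Max (d ` {..<p}) - Min (d ` {..<p})"

definition mat_sup :: "nat \<Rightarrow> (nat \<Rightarrow> nat \<Rightarrow> real) \<Rightarrow> real" where
  "mat_sup p M = Max ((\<lambda>(a, b). \<bar>M a b\<bar>) ` ({..<p} \<times> {..<p}))"

text \<open>Sigma = A C A^t + Gamma.\<close>
definition Sigma_mat :: "(nat \<Rightarrow> nat) \<Rightarrow> (nat \<Rightarrow> nat \<Rightarrow> real) \<Rightarrow> (nat \<Rightarrow> real) \<Rightarrow> nat \<Rightarrow> nat \<Rightarrow> real" where
  "Sigma_mat grp C \<gamma> a b = C (grp a) (grp b) + (if a = b then \<gamma> (grp a) else 0)"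

end

theory Submission
  imports Defs
begin

lemma prob_space_std_gaussian: "prob_space std_gaussian"
  using real_dist_normal_dist unfolding std_gaussian_def real_distribution_def by simp

lemma sets_std_gaussian[simp, measurable_cong]: "sets std_gaussian = sets borel"
  unfolding std_gaussian_def by simp

lemma space_std_gaussian[simp]: "space std_gaussian = UNIV"
  unfolding std_gaussian_def by simp

lemma nn_integral_normal_density: "0 < \<sigma> \<Longrightarrow> (\<integral>\<^sup>+x. ennreal (normal_density \<mu> \<sigma> x) \<partial>lborel) = 1"
  by (subst nn_integral_eq_integral) auto

lemma std_gaussian_nn_integral:
  assumes [measurable]: "f \<in> borel_measurable borel"
  shows "(\<integral>\<^sup>+x. f x \<partial>std_gaussian) = (\<integral>\<^sup>+x. ennreal (std_normal_density x) * f x \<partial>lborel)"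
  unfolding std_gaussian_def by (subst nn_integral_density) auto

lemma mgf_lin1: "(\<integral>\<^sup>+x. ennreal (exp (\<theta> * x)) \<partial>std_gaussian) = ennreal (exp (\<theta>\<^sup>2 / 2))"
proof -
  have eq: "ennreal (std_normal_density x) * ennreal (exp (\<theta> * x)) =
      ennreal (exp (\<theta>\<^sup>2 / 2)) * ennreal (normal_density \<theta> 1 x)" for x
  proof -
    have e: "\<theta> * x + - x\<^sup>2 / 2 = \<theta>\<^sup>2 / 2 + - (x - \<theta>)\<^sup>2 / (2 * 1\<^sup>2)"
      by (simp add: power2_eq_square field_simps)
    have "exp (\<theta> * x) * exp (- x\<^sup>2 / 2) = exp (\<theta>\<^sup>2 / 2) * exp (- (x - \<theta>)\<^sup>2 / (2 * 1\<^sup>2))"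
      by (simp only: exp_add[symmetric] e)
    then have "std_normal_density x * exp (\<theta> * x) = exp (\<theta>\<^sup>2 / 2) * normal_density \<theta> 1 x"
      unfolding std_normal_density_def normal_density_def by (simp add: mult.commute)
    then show ?thesis by (simp add: ennreal_mult[symmetric])
  qed
  show ?thesis
    by (simp add: std_gaussian_nn_integral eq nn_integral_cmult nn_integral_normal_density)
qed

lemma mgf_sq1:
  assumes "\<mu> < 1/2"
  shows "(\<integral>\<^sup>+x. ennreal (exp (\<mu> * x\<^sup>2)) \<partial>std_gaussian) = ennreal (1 / sqrt (1 - 2*\<mu>))"
proof -
  define s where "s = 1 / sqrt (1 - 2*\<mu>)"
  have s0: "s > 0" using assms by (simp add: s_def)
  have s2: "s\<^sup>2 = 1 / (1 - 2*\<mu>)" using assms by (simp add: s_def power_divide)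
  have eq: "ennreal (std_normal_density x) * ennreal (exp (\<mu> * x\<^sup>2)) =
      ennreal s * ennreal (normal_density 0 s x)" for x
  proof -
    have "std_normal_density x * exp (\<mu> * x\<^sup>2) = s * normal_density 0 s x"
    proof -
      have a: "sqrt (2 * pi * s\<^sup>2) = sqrt (2*pi) * s" using s0 by (simp add: real_sqrt_mult)
      have b: "- x\<^sup>2 / 2 + \<mu> * x\<^sup>2 = -(x - 0)\<^sup>2 / (2 * s\<^sup>2)"
        using assms by (simp add: s2 field_simps)
      have c: "exp (- x\<^sup>2 / 2) * exp (\<mu> * x\<^sup>2) = exp (-(x - 0)\<^sup>2 / (2 * s\<^sup>2))"
        unfolding exp_add[symmetric] b[symmetric] by simp
      have "std_normal_density x * exp (\<mu> * x\<^sup>2) = (1 / sqrt (2*pi)) * exp (-(x - 0)\<^sup>2 / (2 * s\<^sup>2))"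
        unfolding std_normal_density_def c[symmetric] by simp
      also have "\<dots> = s * normal_density 0 s x"
        unfolding normal_density_def a using s0 by simp
      finally show ?thesis .
    qed
    then show ?thesis using s0 by (simp add: ennreal_mult[symmetric])
  qed
  show ?thesis
    by (simp add: std_gaussian_nn_integral eq nn_integral_cmult nn_integral_normal_density s0 s_def[symmetric])
qed

abbreviation GM :: "'i set \<Rightarrow> ('i \<Rightarrow> real) measure" where
  "GM I \<equiv> PiM I (\<lambda>_. std_gaussian)"

lemma psf_gauss: "product_sigma_finite (\<lambda>_::'i. std_gaussian)"
  unfolding product_sigma_finite_def
  using prob_space_std_gaussian prob_space_imp_sigma_finite by blast

lemma prob_space_GM: "prob_space (GM I)"
  by (rule prob_space_PiM) (rule prob_space_std_gaussian)

lemma mgf_lin: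
  assumes "finite I"
  shows "(\<integral>\<^sup>+\<omega>. ennreal (exp (\<Sum>j\<in>I. c j * \<omega> j)) \<partial>GM I) = ennreal (exp (\<Sum>j\<in>I. (c j)\<^sup>2 / 2))"
proof -
  have "(\<integral>\<^sup>+\<omega>. ennreal (exp (\<Sum>j\<in>I. c j * \<omega> j)) \<partial>GM I)
     = (\<integral>\<^sup>+\<omega>. (\<Prod>j\<in>I. (\<lambda>j x. ennreal (exp (c j * x))) j (\<omega> j)) \<partial>GM I)"
    by (simp add: exp_sum[OF assms(1)] prod_ennreal)
  also have "\<dots> = (\<Prod>j\<in>I. \<integral>\<^sup>+x. ennreal (exp (c j * x)) \<partial>std_gaussian)"
    by (rule product_sigma_finite.product_nn_integral_prod[OF psf_gauss assms]) simp
  also have "\<dots> = (\<Prod>j\<in>I. ennreal (exp ((c j)\<^sup>2 / 2)))"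
    by (simp add: mgf_lin1)
  also have "\<dots> = ennreal (exp (\<Sum>j\<in>I. (c j)\<^sup>2 / 2))"
    by (subst prod_ennreal) (auto simp: exp_sum assms)
  finally show ?thesis .
qed

lemma mgf_sq:
  assumes "finite I" "\<And>j. j \<in> I \<Longrightarrow> \<mu> j < 1/2"
  shows "(\<integral>\<^sup>+\<omega>. ennreal (exp (\<Sum>j\<in>I. \<mu> j * (\<omega> j)\<^sup>2)) \<partial>GM I) = ennreal (\<Prod>j\<in>I. 1 / sqrt (1 - 2 * \<mu> j))"
proof -
  have "(\<integral>\<^sup>+\<omega>. ennreal (exp (\<Sum>j\<in>I. \<mu> j * (\<omega> j)\<^sup>2)) \<partial>GM I)
     = (\<integral>\<^sup>+\<omega>. (\<Prod>j\<in>I. (\<lambda>j x. ennreal (exp (\<mu> j * x\<^sup>2))) j (\<omega> j)) \<partial>GM I)"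
    by (simp add: exp_sum[OF assms(1)] prod_ennreal)
  also have "\<dots> = (\<Prod>j\<in>I. \<integral>\<^sup>+x. ennreal (exp (\<mu> j * x\<^sup>2)) \<partial>std_gaussian)"
    by (rule product_sigma_finite.product_nn_integral_prod[OF psf_gauss assms(1)]) simp
  also have "\<dots> = (\<Prod>j\<in>I. ennreal (1 / sqrt (1 - 2 * \<mu> j)))"
    by (intro prod.cong refl mgf_sq1 assms(2))
  also have "\<dots> = ennreal (\<Prod>j\<in>I. 1 / sqrt (1 - 2 * \<mu> j))"
  proof -
    have "\<And>j. j \<in> I \<Longrightarrow> 2 * \<mu> j \<le> 1" using assms(2) by (metis less_eq_real_def mult.commute pos_less_divide_eq zero_less_numeral)
    then show ?thesis by (subst prod_ennreal) auto
  qed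
  finally show ?thesis .
qed

lemma lin_tail0:
  assumes fin: "finite J" and t: "t \<ge> 0"
  shows "emeasure (GM J) {x \<in> space (GM J). t * sqrt (\<Sum>j\<in>J. (w j)\<^sup>2) < (\<Sum>j\<in>J. w j * x j)}
         \<le> ennreal (exp (- t\<^sup>2 / 2))"
proof (cases "(\<Sum>j\<in>J. (w j)\<^sup>2) = 0")
  case True
  then have "\<forall>j\<in>J. (w j)\<^sup>2 = 0" using fin by (subst sum_nonneg_eq_0_iff[symmetric]) auto
  then have "{x \<in> space (GM J). t * sqrt (\<Sum>j\<in>J. (w j)\<^sup>2) < (\<Sum>j\<in>J. w j * x j)} = {}"
    using True by auto
  then show ?thesis by (metis emeasure_empty zero_le)
next
  case False
  define s where "s = sqrt (\<Sum>j\<in>J. (w j)\<^sup>2)"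
  have s0: "s > 0" using False unfolding s_def
    by (metis real_sqrt_gt_0_iff sum_nonneg zero_le_power2 order_le_less)
  define l where "l = t / s"
  have l0: "l \<ge> 0" using t s0 by (simp add: l_def)
  define A where "A = {x \<in> space (GM J). t * s < (\<Sum>j\<in>J. w j * x j)}"
  have Am: "A \<in> sets (GM J)" unfolding A_def by measurable
  have "emeasure (GM J) A = (\<integral>\<^sup>+x. indicator A x \<partial>GM J)"
    using Am by simp
  also have "\<dots> \<le> (\<integral>\<^sup>+x. ennreal (exp (- (l * t * s))) * ennreal (exp (\<Sum>j\<in>J. (l * w j) * x j)) \<partial>GM J)"
  proof (rule nn_integral_mono)
    fix x assume x: "x \<in> space (GM J)"
    show "indicator A x \<le> ennreal (exp (- (l * t * s))) * ennreal (exp (\<Sum>j\<in>J. (l * w j) * x j))"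
    proof (cases "x \<in> A")
      case True
      then have "t * s < (\<Sum>j\<in>J. w j * x j)" unfolding A_def by auto
      then have "l * (t * s) \<le> l * (\<Sum>j\<in>J. w j * x j)" using l0 by (intro mult_left_mono) auto
      then have "0 \<le> - (l * t * s) + (\<Sum>j\<in>J. (l * w j) * x j)"
        by (simp add: sum_distrib_left mult.assoc)
      then have "1 \<le> exp (- (l * t * s)) * exp (\<Sum>j\<in>J. (l * w j) * x j)"
        by (simp add: exp_add[symmetric])
      then show ?thesis using True by (simp add: ennreal_mult[symmetric])
    qed simp
  qed
  also have "\<dots> = ennreal (exp (- (l * t * s))) * (\<integral>\<^sup>+x. ennreal (exp (\<Sum>j\<in>J. (l * w j) * x j)) \<partial>GM J)"
    by (rule nn_integral_cmult) measurable
  also have "\<dots> = ennreal (exp (- (l * t * s)) * exp (\<Sum>j\<in>J. (l * w j)\<^sup>2 / 2))"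
    by (simp add: mgf_lin[OF fin] ennreal_mult)
  also have "\<dots> = ennreal (exp (- t\<^sup>2 / 2))"
  proof -
    have "(\<Sum>j\<in>J. (l * w j)\<^sup>2 / 2) = l\<^sup>2 * s\<^sup>2 / 2"
      unfolding s_def by (simp add: power_mult_distrib sum_divide_distrib[symmetric] sum_distrib_left sum_nonneg)
    then have "- (l * t * s) + (\<Sum>j\<in>J. (l * w j)\<^sup>2 / 2) = - t\<^sup>2 / 2"
      using s0 unfolding l_def by (simp add: field_simps power2_eq_square)
    then show ?thesis by (simp add: exp_add[symmetric])
  qed
  finally show ?thesis unfolding A_def s_def .
qed

lemma lin_tail:
  assumes fin: "finite I" and JI: "J \<subseteq> I" and t: "t \<ge> 0"
   and meas[measurable]: "\<And>j. j \<in> J \<Longrightarrow> coef j \<in> borel_measurable (GM I)"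
   and dep: "\<And>j \<omega> \<omega>'. j \<in> J \<Longrightarrow> (\<And>h. h \<in> I - J \<Longrightarrow> \<omega> h = \<omega>' h) \<Longrightarrow> coef j \<omega> = coef j \<omega>'"
  shows "emeasure (GM I) {\<omega> \<in> space (GM I). t * sqrt (\<Sum>j\<in>J. (coef j \<omega>)\<^sup>2) < (\<Sum>j\<in>J. coef j \<omega> * \<omega> j)}
    \<le> ennreal (exp (- t\<^sup>2 / 2))"
proof -
  define H where "H = I - J"
  have IHJ: "I = H \<union> J" using JI unfolding H_def by auto
  have HJ: "H \<inter> J = {}" unfolding H_def by auto
  have finH: "finite H" "finite J" using fin JI unfolding H_def by (auto intro: finite_subset)
  define A where "A = {\<omega> \<in> space (GM I). t * sqrt (\<Sum>j\<in>J. (coef j \<omega>)\<^sup>2) < (\<Sum>j\<in>J. coef j \<omega> * \<omega> j)}"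
  have Am: "A \<in> sets (GM I)"
  proof -
    have cm[measurable]: "(\<lambda>\<omega>. \<omega> j) \<in> borel_measurable (GM I)" if "j \<in> J" for j
    proof -
      have "j \<in> I" using that JI by auto
      then show ?thesis by measurable
    qed
    show ?thesis unfolding A_def by measurable
  qed
  have "emeasure (GM I) A = (\<integral>\<^sup>+\<omega>. indicator A \<omega> \<partial>GM (H \<union> J))"
    using Am IHJ by simp
  also have "\<dots> = (\<integral>\<^sup>+y. (\<integral>\<^sup>+x. indicator A (merge H J (y, x)) \<partial>GM J) \<partial>GM H)"
    by (rule product_sigma_finite.product_nn_integral_fold[OF psf_gauss HJ finH])
       (use Am IHJ in simp)
  also have "\<dots> \<le> (\<integral>\<^sup>+y. ennreal (exp (- t\<^sup>2 / 2)) \<partial>GM H)"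
  proof (rule nn_integral_mono)
    fix y assume y: "y \<in> space (GM H)"
    define w where "w j = coef j (merge H J (y, \<lambda>_. 0))" for j
    have "(\<integral>\<^sup>+x. indicator A (merge H J (y, x)) \<partial>GM J)
        = (\<integral>\<^sup>+x. indicator {x \<in> space (GM J). t * sqrt (\<Sum>j\<in>J. (w j)\<^sup>2) < (\<Sum>j\<in>J. w j * x j)} x \<partial>GM J)"
    proof (rule nn_integral_cong)
      fix x assume x: "x \<in> space (GM J)"
      have sp: "merge H J (y, x) \<in> space (GM I)"
        using x y IHJ by (auto simp: space_PiM)
      have cw: "coef j (merge H J (y, x)) = w j" if "j \<in> J" for j
        unfolding w_def using that HJ by (intro dep) (auto simp: merge_def H_def)
      have mx: "merge H J (y, x) j = x j" if "j \<in> J" for j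
        using that HJ by (auto simp: merge_def)
      show "indicator A (merge H J (y, x)) = indicator {x \<in> space (GM J). t * sqrt (\<Sum>j\<in>J. (w j)\<^sup>2) < (\<Sum>j\<in>J. w j * x j)} x"
        using sp x unfolding A_def
        by (simp add: cw mx cong: sum.cong split: split_indicator)
    qed
    also have "\<dots> = emeasure (GM J) {x \<in> space (GM J). t * sqrt (\<Sum>j\<in>J. (w j)\<^sup>2) < (\<Sum>j\<in>J. w j * x j)}"
      by (rule nn_integral_indicator) measurable
    also have "\<dots> \<le> ennreal (exp (- t\<^sup>2 / 2))"
      by (rule lin_tail0[OF finH(2) t])
    finally show "(\<integral>\<^sup>+x. indicator A (merge H J (y, x)) \<partial>GM J) \<le> ennreal (exp (- t\<^sup>2 / 2))" .
  qed
  also have "\<dots> = ennreal (exp (- t\<^sup>2 / 2))"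
    using prob_space.emeasure_space_1[OF prob_space_GM[of H]] by simp
  finally show ?thesis unfolding A_def .
qed

lemma chernoff:
  assumes [measurable]: "f \<in> borel_measurable M" and l: "l \<ge> 0"
  shows "emeasure M {x \<in> space M. c < f x} \<le> ennreal (exp (- l * c)) * (\<integral>\<^sup>+x. ennreal (exp (l * f x)) \<partial>M)"
proof -
  have "emeasure M {x \<in> space M. c < f x} = (\<integral>\<^sup>+x. indicator {x \<in> space M. c < f x} x \<partial>M)"
    by (rule nn_integral_indicator[symmetric]) measurable
  also have "\<dots> \<le> (\<integral>\<^sup>+x. ennreal (exp (- l * c)) * ennreal (exp (l * f x)) \<partial>M)"
  proof (rule nn_integral_mono)
    fix x assume "x \<in> space M"
    show "indicator {x \<in> space M. c < f x} x \<le> ennreal (exp (- l * c)) * ennreal (exp (l * f x))"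
    proof (cases "c < f x")
      case True
      then have "l * c \<le> l * f x" using l by (intro mult_left_mono) auto
      then have "1 \<le> exp (- l * c) * exp (l * f x)" by (simp add: exp_add[symmetric])
      then show ?thesis using True \<open>x \<in> space M\<close> by (simp add: ennreal_mult[symmetric])
    qed simp
  qed
  also have "\<dots> = ennreal (exp (- l * c)) * (\<integral>\<^sup>+x. ennreal (exp (l * f x)) \<partial>M)"
    by (rule nn_integral_cmult) measurable
  finally show ?thesis .
qed

lemma quad_mgf:
  fixes R :: "'r set" and C :: "'c set" and a :: "'c \<Rightarrow> real"
  assumes fR: "finite R" and fC: "finite C" and l: "l \<ge> 0" and la: "2 * l * (\<Sum>j\<in>C. (a j)\<^sup>2) < 1"
  shows "(\<integral>\<^sup>+\<omega>. ennreal (exp (l * (\<Sum>i\<in>R. (\<Sum>j\<in>C. a j * \<omega> (i, j))\<^sup>2))) \<partial>GM (R \<times> C))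
       = ennreal ((1 / sqrt (1 - 2 * l * (\<Sum>j\<in>C. (a j)\<^sup>2))) ^ card R)"
proof -
  define A where "A = (\<Sum>j\<in>C. (a j)\<^sup>2)"
  define q where "q = sqrt (2 * l)"
  have q2: "q\<^sup>2 = 2 * l" using l by (simp add: q_def)
  have fI: "finite (R \<times> C)" using fR fC by simp
  have step1: "ennreal (exp (l * (\<Sum>i\<in>R. (\<Sum>j\<in>C. a j * \<omega> (i, j))\<^sup>2)))
      = (\<integral>\<^sup>+\<xi>. ennreal (exp (\<Sum>i\<in>R. (q * (\<Sum>j\<in>C. a j * \<omega> (i, j))) * \<xi> i)) \<partial>GM R)" for \<omega>
  proof -
    have "(\<Sum>i\<in>R. (q * (\<Sum>j\<in>C. a j * \<omega> (i, j)))\<^sup>2 / 2) = l * (\<Sum>i\<in>R. (\<Sum>j\<in>C. a j * \<omega> (i, j))\<^sup>2)"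
    proof -
      have "(\<Sum>i\<in>R. (q * (\<Sum>j\<in>C. a j * \<omega> (i, j)))\<^sup>2 / 2) = (\<Sum>i\<in>R. l * (\<Sum>j\<in>C. a j * \<omega> (i, j))\<^sup>2)"
      proof -
        have sq: "(q * S)\<^sup>2 / 2 = l * S\<^sup>2" for S
          by (simp add: power_mult_distrib q2)
        show ?thesis by (simp only: sq)
      qed
      then show ?thesis by (simp only: sum_distrib_left)
    qed
    moreover have "(\<integral>\<^sup>+\<xi>. ennreal (exp (\<Sum>i\<in>R. (q * (\<Sum>j\<in>C. a j * \<omega> (i, j))) * \<xi> i)) \<partial>GM R)
        = ennreal (exp (\<Sum>i\<in>R. (q * (\<Sum>j\<in>C. a j * \<omega> (i, j)))\<^sup>2 / 2))"
      by (rule mgf_lin[OF fR])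
    ultimately show ?thesis by (simp only:)
  qed
  have "(\<integral>\<^sup>+\<omega>. ennreal (exp (l * (\<Sum>i\<in>R. (\<Sum>j\<in>C. a j * \<omega> (i, j))\<^sup>2))) \<partial>GM (R \<times> C))
      = (\<integral>\<^sup>+\<omega>. (\<integral>\<^sup>+\<xi>. ennreal (exp (\<Sum>i\<in>R. (q * (\<Sum>j\<in>C. a j * \<omega> (i, j))) * \<xi> i)) \<partial>GM R) \<partial>GM (R \<times> C))"
    by (simp only: step1)
  also have "\<dots> = (\<integral>\<^sup>+\<xi>. (\<integral>\<^sup>+\<omega>. ennreal (exp (\<Sum>i\<in>R. (q * (\<Sum>j\<in>C. a j * \<omega> (i, j))) * \<xi> i)) \<partial>GM (R \<times> C)) \<partial>GM R)"
  proof (rule pair_sigma_finite.Fubini')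
    show "pair_sigma_finite (GM R) (GM (R \<times> C))"
      unfolding pair_sigma_finite_def
      by (intro conjI prob_space_imp_sigma_finite prob_space_GM)
    have [measurable]: "(\<lambda>x. snd x (i, j)) \<in> borel_measurable (GM R \<Otimes>\<^sub>M GM (R \<times> C))" if "i \<in> R" "j \<in> C" for i j
    proof -
      have "(i, j) \<in> R \<times> C" using that by auto
      then show ?thesis by measurable
    qed
    have [measurable]: "(\<lambda>x. fst x i) \<in> borel_measurable (GM R \<Otimes>\<^sub>M GM (R \<times> C))" if "i \<in> R" for i
      using that by measurable
    show "case_prod (\<lambda>\<xi> \<omega>. ennreal (exp (\<Sum>i\<in>R. (q * (\<Sum>j\<in>C. a j * \<omega> (i, j))) * \<xi> i)))
        \<in> borel_measurable (GM R \<Otimes>\<^sub>M GM (R \<times> C))"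
      unfolding split_beta'
      by (intro borel_measurable_sum borel_measurable_times measurable_compose[OF _ measurable_ennreal]
          measurable_compose[OF _ borel_measurable_exp] borel_measurable_const) auto
  qed
  also have "\<dots> = (\<integral>\<^sup>+\<xi>. ennreal (exp (\<Sum>i\<in>R. (l * A) * (\<xi> i)\<^sup>2)) \<partial>GM R)"
  proof (rule nn_integral_cong)
    fix \<xi> :: "'r \<Rightarrow> real"
    have e1: "(\<Sum>i\<in>R. (q * (\<Sum>j\<in>C. a j * \<omega> (i, j))) * \<xi> i) = (\<Sum>ij\<in>R \<times> C. (q * \<xi> (fst ij) * a (snd ij)) * \<omega> ij)" for \<omega>
      by (simp add: sum.cartesian_product' sum_distrib_left sum_distrib_right mult_ac)
    have e2: "(\<Sum>ij\<in>R \<times> C. (q * \<xi> (fst ij) * a (snd ij))\<^sup>2 / 2) = (\<Sum>i\<in>R. (l * A) * (\<xi> i)\<^sup>2)"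
    proof -
      have sq: "(q * x * y)\<^sup>2 / 2 = l * x\<^sup>2 * y\<^sup>2" for x y
        by (simp add: power_mult_distrib q2)
      have "(\<Sum>ij\<in>R \<times> C. (q * \<xi> (fst ij) * a (snd ij))\<^sup>2 / 2) = (\<Sum>i\<in>R. \<Sum>j\<in>C. l * (\<xi> i)\<^sup>2 * (a j)\<^sup>2)"
        by (simp only: sum.cartesian_product' sq fst_conv snd_conv)
      also have "\<dots> = (\<Sum>i\<in>R. (l * A) * (\<xi> i)\<^sup>2)"
        by (intro sum.cong refl) (simp add: A_def sum_distrib_left mult_ac)
      finally show ?thesis .
    qed
    show "(\<integral>\<^sup>+\<omega>. ennreal (exp (\<Sum>i\<in>R. (q * (\<Sum>j\<in>C. a j * \<omega> (i, j))) * \<xi> i)) \<partial>GM (R \<times> C))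
        = ennreal (exp (\<Sum>i\<in>R. (l * A) * (\<xi> i)\<^sup>2))"
      unfolding e1 mgf_lin[OF fI] e2 ..
  qed
  also have "\<dots> = ennreal (\<Prod>i\<in>R. 1 / sqrt (1 - 2 * (l * A)))"
    by (rule mgf_sq[OF fR]) (use la in \<open>simp add: A_def\<close>)
  finally show ?thesis by (simp add: A_def mult.assoc)
qed

lemma quad_tail:
  fixes R :: "'r set" and C :: "'c set" and a :: "'c \<Rightarrow> real"
  assumes fR: "finite R" and fC: "finite C"
  shows "emeasure (GM (R \<times> C)) {\<omega> \<in> space (GM (R \<times> C)).
            4 * real (card R) * (\<Sum>j\<in>C. (a j)\<^sup>2) < (\<Sum>i\<in>R. (\<Sum>j\<in>C. a j * \<omega> (i, j))\<^sup>2)}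
         \<le> ennreal (exp (- real (card R) / 2))"
proof (cases "(\<Sum>j\<in>C. (a j)\<^sup>2) = 0")
  case True
  then have "\<forall>j\<in>C. (a j)\<^sup>2 = 0" using fC by (subst sum_nonneg_eq_0_iff[symmetric]) auto
  then have "{\<omega> \<in> space (GM (R \<times> C)).
            4 * real (card R) * (\<Sum>j\<in>C. (a j)\<^sup>2) < (\<Sum>i\<in>R. (\<Sum>j\<in>C. a j * \<omega> (i, j))\<^sup>2)} = {}"
    using True by auto
  then show ?thesis by (metis emeasure_empty zero_le)
next
  case False
  define A where "A = (\<Sum>j\<in>C. (a j)\<^sup>2)"
  have A0: "A > 0" using False sum_nonneg[of C "\<lambda>j. (a j)\<^sup>2"] unfolding A_def by (simp add: less_le)
  define l where "l = 1 / (4 * A)"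
  have l0: "l \<ge> 0" using A0 by (simp add: l_def)
  have la: "2 * l * A = 1/2" using A0 by (simp add: l_def)
  have fI: "finite (R \<times> C)" using fR fC by simp
  let ?f = "\<lambda>\<omega>. (\<Sum>i\<in>R. (\<Sum>j\<in>C. a j * \<omega> (i, j))\<^sup>2)"
  have fm: "?f \<in> borel_measurable (GM (R \<times> C))"
  proof -
    have [measurable]: "(\<lambda>\<omega>. \<omega> (i, j)) \<in> borel_measurable (GM (R \<times> C))" if "i \<in> R" "j \<in> C" for i j
    proof -
      have "(i, j) \<in> R \<times> C" using that by auto
      then show ?thesis by measurable
    qed
    show ?thesis by (intro borel_measurable_sum borel_measurable_power borel_measurable_times borel_measurable_const) auto
  qed
  have "emeasure (GM (R \<times> C)) {\<omega> \<in> space (GM (R \<times> C)). 4 * real (card R) * A < ?f \<omega>}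
      \<le> ennreal (exp (- l * (4 * real (card R) * A))) * (\<integral>\<^sup>+\<omega>. ennreal (exp (l * ?f \<omega>)) \<partial>GM (R \<times> C))"
    by (rule chernoff[OF fm l0])
  also have "\<dots> = ennreal (exp (- l * (4 * real (card R) * A))) * ennreal ((1 / sqrt (1 - 2 * l * A)) ^ card R)"
  proof -
    have "(\<integral>\<^sup>+\<omega>. ennreal (exp (l * ?f \<omega>)) \<partial>GM (R \<times> C)) = ennreal ((1 / sqrt (1 - 2 * l * (\<Sum>j\<in>C. (a j)\<^sup>2))) ^ card R)"
      by (rule quad_mgf[OF fR fC l0]) (use la in \<open>simp add: A_def\<close>)
    then show ?thesis by (simp only: A_def)
  qed
  also have "\<dots> = ennreal (exp (- real (card R)) * sqrt 2 ^ card R)"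
  proof -
    have "l * (4 * real (card R) * A) = real (card R)" using A0 by (simp add: l_def)
    moreover have "1 / sqrt (1 - 2 * l * A) = sqrt 2"
    proof -
      have e: "1 - 2 * l * A = 1/2" using la by linarith
      show ?thesis unfolding e by (simp add: real_sqrt_divide)
    qed
    ultimately show ?thesis by (simp add: ennreal_mult[symmetric])
  qed
  also have "\<dots> \<le> ennreal (exp (- real (card R) / 2))"
  proof (rule ennreal_leI)
    have "sqrt 2 \<le> exp (1/2)"
    proof -
      have "(2::real) \<le> exp 1" using exp_ge_add_one_self[of 1] by simp
      then have "sqrt 2 \<le> sqrt (exp 1)" by simp
      also have "sqrt (exp 1) = exp (1/2)"
      proof (rule real_sqrt_unique)
        show "(exp (1/2))\<^sup>2 = exp (1::real)" by (simp add: power2_eq_square exp_add[symmetric])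
      qed simp
      finally show ?thesis .
    qed
    then have "sqrt 2 ^ card R \<le> exp (1/2) ^ card R" by (intro power_mono) auto
    also have "\<dots> = exp (real (card R) / 2)" by (simp add: exp_of_nat_mult[symmetric])
    finally have "exp (- real (card R)) * sqrt 2 ^ card R \<le> exp (- real (card R)) * exp (real (card R) / 2)"
      by (intro mult_left_mono) auto
    also have "\<dots> = exp (- real (card R) / 2)" by (simp add: exp_add[symmetric])
    finally show "exp (- real (card R)) * sqrt 2 ^ card R \<le> exp (- real (card R) / 2)" .
  qed
  finally show ?thesis unfolding A_def .
qed


lemma col_mgf:
  fixes R :: "'r set" and C :: "'c set"
  assumes fR: "finite R" and fC: "finite C" and c0: "c0 \<in> C" and l: "l < 1/2"
  shows "(\<integral>\<^sup>+\<omega>. ennreal (exp (l * (\<Sum>i\<in>R. (\<omega> (i, c0))\<^sup>2))) \<partial>GM (R \<times> C))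
       = ennreal ((1 / sqrt (1 - 2 * l)) ^ card R)"
proof -
  define \<mu> where "\<mu> ij = (if snd ij = c0 then l else 0)" for ij :: "'r \<times> 'c"
  have fI: "finite (R \<times> C)" using fR fC by simp
  have e1: "l * (\<Sum>i\<in>R. (\<omega> (i, c0))\<^sup>2) = (\<Sum>ij\<in>R \<times> C. \<mu> ij * (\<omega> ij)\<^sup>2)" for \<omega> :: "'r \<times> 'c \<Rightarrow> real"
  proof -
    have "(\<Sum>ij\<in>R \<times> C. \<mu> ij * (\<omega> ij)\<^sup>2) = (\<Sum>i\<in>R. \<Sum>j\<in>C. (if j = c0 then l * (\<omega> (i, j))\<^sup>2 else 0))"
      unfolding sum.cartesian_product' \<mu>_def by (intro sum.cong refl) auto
    also have "\<dots> = (\<Sum>i\<in>R. l * (\<omega> (i, c0))\<^sup>2)"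
      by (intro sum.cong refl) (simp add: sum.delta[OF fC] c0)
    finally show ?thesis by (simp add: sum_distrib_left)
  qed
  have e2: "(\<Prod>ij\<in>R \<times> C. 1 / sqrt (1 - 2 * \<mu> ij)) = (1 / sqrt (1 - 2 * l)) ^ card R"
  proof -
    have "(\<Prod>ij\<in>R \<times> C. 1 / sqrt (1 - 2 * \<mu> ij)) = (\<Prod>i\<in>R. \<Prod>j\<in>C. (if j = c0 then 1 / sqrt (1 - 2 * l) else 1))"
      unfolding prod.cartesian_product' \<mu>_def by (intro prod.cong refl) auto
    also have "\<dots> = (\<Prod>i\<in>R. 1 / sqrt (1 - 2 * l))"
      by (intro prod.cong refl) (simp add: prod.delta[OF fC] c0)
    finally show ?thesis by simp
  qed
  have "(\<integral>\<^sup>+\<omega>. ennreal (exp (\<Sum>ij\<in>R \<times> C. \<mu> ij * (\<omega> ij)\<^sup>2)) \<partial>GM (R \<times> C))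
      = ennreal (\<Prod>ij\<in>R \<times> C. 1 / sqrt (1 - 2 * \<mu> ij))"
    by (rule mgf_sq[OF fI]) (use l in \<open>auto simp: \<mu>_def\<close>)
  then show ?thesis by (simp only: e1 e2)
qed

lemma one_div_exp: "1 / exp (a::real) = exp (- a)"
  by (simp add: exp_minus inverse_eq_divide)

lemma upper_exp_aux:
  fixes \<delta> :: real
  assumes "0 \<le> \<delta>" "\<delta> \<le> 1"
  shows "exp (- (\<delta>/8) * (1 + \<delta>)) * (1 / sqrt (1 - 2 * (\<delta>/8))) \<le> exp (- \<delta>\<^sup>2 / 16)"
proof -
  define x where "x = \<delta>/4"
  have x: "0 \<le> x" "x \<le> 1/2" using assms by (auto simp: x_def)
  have "- x - 2 * x\<^sup>2 \<le> ln (1 - x)" by (rule ln_one_minus_pos_lower_bound[OF x])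
  then have "exp (- x - 2 * x\<^sup>2) \<le> exp (ln (1 - x))" by simp
  also have "exp (ln (1 - x)) = 1 - x" using x by simp
  finally have "exp (- x - 2 * x\<^sup>2) \<le> 1 - x" .
  then have "sqrt (exp (- x - 2 * x\<^sup>2)) \<le> sqrt (1 - x)" by simp
  moreover have "sqrt (exp (- x - 2 * x\<^sup>2)) = exp ((- x - 2 * x\<^sup>2) / 2)"
    by (rule real_sqrt_unique) (simp_all add: power2_eq_square exp_add[symmetric])
  ultimately have h: "exp ((- x - 2 * x\<^sup>2) / 2) \<le> sqrt (1 - x)" by simp
  have "1 / sqrt (1 - x) \<le> 1 / exp ((- x - 2 * x\<^sup>2) / 2)"
    by (rule divide_left_mono[OF h]) (use x in auto)
  also have "\<dots> = exp (- ((- x - 2 * x\<^sup>2) / 2))" by (rule one_div_exp)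
  also have "- ((- x - 2 * x\<^sup>2) / 2) = (x + 2 * x\<^sup>2) / 2" by (simp add: field_simps)
  finally have h2: "1 / sqrt (1 - x) \<le> exp ((x + 2 * x\<^sup>2) / 2)" .
  have "exp (- (\<delta>/8) * (1 + \<delta>)) * (1 / sqrt (1 - 2 * (\<delta>/8))) \<le> exp (- (\<delta>/8) * (1 + \<delta>)) * exp ((x + 2 * x\<^sup>2) / 2)"
    using h2 by (intro mult_left_mono) (auto simp: x_def)
  also have "\<dots> = exp (- (\<delta>/8) * (1 + \<delta>) + (x + 2 * x\<^sup>2) / 2)" by (simp only: exp_add)
  also have "- (\<delta>/8) * (1 + \<delta>) + (x + 2 * x\<^sup>2) / 2 = - \<delta>\<^sup>2 / 16"
    unfolding x_def by (simp add: power2_eq_square field_simps)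
  finally show ?thesis by simp
qed

lemma lower_exp_aux:
  fixes \<delta> :: real
  assumes "0 \<le> \<delta>" "\<delta> \<le> 1"
  shows "exp ((\<delta>/8) * (1 - \<delta>)) * (1 / sqrt (1 - 2 * (- (\<delta>/8)))) \<le> exp (- \<delta>\<^sup>2 / 16)"
proof -
  define x where "x = \<delta>/4"
  have x: "0 \<le> x" "x \<le> 1" using assms by (auto simp: x_def)
  have "x - x\<^sup>2 \<le> ln (1 + x)" by (rule ln_one_plus_pos_lower_bound[OF x])
  then have "exp (x - x\<^sup>2) \<le> exp (ln (1 + x))" by simp
  also have "exp (ln (1 + x)) = 1 + x" using x by simp
  finally have "exp (x - x\<^sup>2) \<le> 1 + x" .
  then have "sqrt (exp (x - x\<^sup>2)) \<le> sqrt (1 + x)" by simp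
  moreover have "sqrt (exp (x - x\<^sup>2)) = exp ((x - x\<^sup>2) / 2)"
    by (rule real_sqrt_unique) (simp_all add: power2_eq_square exp_add[symmetric])
  ultimately have h: "exp ((x - x\<^sup>2) / 2) \<le> sqrt (1 + x)" by simp
  have "1 / sqrt (1 + x) \<le> 1 / exp ((x - x\<^sup>2) / 2)"
    by (rule divide_left_mono[OF h]) (use x in auto)
  also have "\<dots> = exp (- ((x - x\<^sup>2) / 2))" by (rule one_div_exp)
  also have "- ((x - x\<^sup>2) / 2) = (x\<^sup>2 - x) / 2" by (simp add: field_simps)
  finally have h2: "1 / sqrt (1 + x) \<le> exp ((x\<^sup>2 - x) / 2)" .
  have "exp ((\<delta>/8) * (1 - \<delta>)) * (1 / sqrt (1 - 2 * (- (\<delta>/8)))) \<le> exp ((\<delta>/8) * (1 - \<delta>)) * exp ((x\<^sup>2 - x) / 2)"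
    using h2 by (intro mult_left_mono) (auto simp: x_def)
  also have "\<dots> = exp ((\<delta>/8) * (1 - \<delta>) + (x\<^sup>2 - x) / 2)" by (simp add: exp_add)
  also have "(\<delta>/8) * (1 - \<delta>) + (x\<^sup>2 - x) / 2 = - 3 * \<delta>\<^sup>2 / 32"
    unfolding x_def by (simp add: power2_eq_square field_simps)
  also have "exp (- 3 * \<delta>\<^sup>2 / 32) \<le> exp (- \<delta>\<^sup>2 / 16)" by simp
  finally show ?thesis .
qed

lemma pow_bound_aux:
  fixes r :: nat
  assumes "0 \<le> B" "exp (a) * B \<le> exp b"
  shows "exp (a * real r) * B ^ r \<le> exp (b * real r)"
proof -
  have "exp (a * real r) * B ^ r = (exp a * B) ^ r"
    by (simp add: power_mult_distrib exp_of_nat_mult[symmetric] mult.commute)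
  also have "\<dots> \<le> (exp b) ^ r" using assms by (intro power_mono) auto
  also have "\<dots> = exp (b * real r)" by (simp add: exp_of_nat_mult[symmetric] mult.commute)
  finally show ?thesis .
qed

lemma col_meas:
  assumes "finite R" "c0 \<in> C"
  shows "(\<lambda>\<omega>. \<Sum>i\<in>R. (\<omega> (i, c0))\<^sup>2) \<in> borel_measurable (GM (R \<times> C))"
proof -
  have [measurable]: "(\<lambda>\<omega>. \<omega> (i, c0)) \<in> borel_measurable (GM (R \<times> C))" if "i \<in> R" for i
  proof -
    have "(i, c0) \<in> R \<times> C" using that assms by auto
    then show ?thesis by measurable
  qed
  show ?thesis by (intro borel_measurable_sum borel_measurable_power) auto
qed

lemma chisq_upper:
  fixes R :: "'r set" and C :: "'c set"
  assumes fR: "finite R" and fC: "finite C" and c0: "c0 \<in> C" and d: "0 \<le> \<delta>" "\<delta> \<le> 1"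
  shows "emeasure (GM (R \<times> C)) {\<omega> \<in> space (GM (R \<times> C)). real (card R) * (1 + \<delta>) < (\<Sum>i\<in>R. (\<omega> (i, c0))\<^sup>2)}
    \<le> ennreal (exp (- \<delta>\<^sup>2 / 16 * real (card R)))"
proof -
  have l0: "\<delta>/8 \<ge> 0" using d by simp
  have "emeasure (GM (R \<times> C)) {\<omega> \<in> space (GM (R \<times> C)). real (card R) * (1 + \<delta>) < (\<Sum>i\<in>R. (\<omega> (i, c0))\<^sup>2)}
      \<le> ennreal (exp (- (\<delta>/8) * (real (card R) * (1 + \<delta>)))) * (\<integral>\<^sup>+\<omega>. ennreal (exp ((\<delta>/8) * (\<Sum>i\<in>R. (\<omega> (i, c0))\<^sup>2))) \<partial>GM (R \<times> C))"
    by (rule chernoff[OF col_meas[OF fR c0] l0])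
  also have "(\<integral>\<^sup>+\<omega>. ennreal (exp ((\<delta>/8) * (\<Sum>i\<in>R. (\<omega> (i, c0))\<^sup>2))) \<partial>GM (R \<times> C))
      = ennreal ((1 / sqrt (1 - 2 * (\<delta>/8))) ^ card R)"
    by (rule col_mgf[OF fR fC c0]) (use d in simp)
  also have "ennreal (exp (- (\<delta>/8) * (real (card R) * (1 + \<delta>)))) * ennreal ((1 / sqrt (1 - 2 * (\<delta>/8))) ^ card R)
      = ennreal (exp (- (\<delta>/8) * (1 + \<delta>) * real (card R)) * (1 / sqrt (1 - 2 * (\<delta>/8))) ^ card R)"
    using d by (simp add: ennreal_mult[symmetric] mult_ac)
  also have "\<dots> \<le> ennreal (exp (- \<delta>\<^sup>2 / 16 * real (card R)))"
    using d by (intro ennreal_leI pow_bound_aux upper_exp_aux) auto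
  finally show ?thesis .
qed

lemma chisq_lower:
  fixes R :: "'r set" and C :: "'c set"
  assumes fR: "finite R" and fC: "finite C" and c0: "c0 \<in> C" and d: "0 \<le> \<delta>" "\<delta> \<le> 1"
  shows "emeasure (GM (R \<times> C)) {\<omega> \<in> space (GM (R \<times> C)). (\<Sum>i\<in>R. (\<omega> (i, c0))\<^sup>2) < real (card R) * (1 - \<delta>)}
    \<le> ennreal (exp (- \<delta>\<^sup>2 / 16 * real (card R)))"
proof -
  have l0: "\<delta>/8 \<ge> 0" using d by simp
  have fm: "(\<lambda>\<omega>. - (\<Sum>i\<in>R. (\<omega> (i, c0))\<^sup>2)) \<in> borel_measurable (GM (R \<times> C))"
    using col_meas[OF fR c0] by measurable
  have "emeasure (GM (R \<times> C)) {\<omega> \<in> space (GM (R \<times> C)). (\<Sum>i\<in>R. (\<omega> (i, c0))\<^sup>2) < real (card R) * (1 - \<delta>)}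
      = emeasure (GM (R \<times> C)) {\<omega> \<in> space (GM (R \<times> C)). - (real (card R) * (1 - \<delta>)) < - (\<Sum>i\<in>R. (\<omega> (i, c0))\<^sup>2)}"
    by simp
  also have "\<dots> \<le> ennreal (exp (- (\<delta>/8) * (- (real (card R) * (1 - \<delta>))))) * (\<integral>\<^sup>+\<omega>. ennreal (exp ((\<delta>/8) * (- (\<Sum>i\<in>R. (\<omega> (i, c0))\<^sup>2)))) \<partial>GM (R \<times> C))"
    by (rule chernoff[OF fm l0])
  also have "(\<integral>\<^sup>+\<omega>. ennreal (exp ((\<delta>/8) * (- (\<Sum>i\<in>R. (\<omega> (i, c0))\<^sup>2)))) \<partial>GM (R \<times> C))
      = (\<integral>\<^sup>+\<omega>. ennreal (exp ((- (\<delta>/8)) * (\<Sum>i\<in>R. (\<omega> (i, c0))\<^sup>2))) \<partial>GM (R \<times> C))"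
    by simp
  also have "\<dots> = ennreal ((1 / sqrt (1 - 2 * (- (\<delta>/8)))) ^ card R)"
    by (rule col_mgf[OF fR fC c0]) (use d in simp)
  also have "ennreal (exp (- (\<delta>/8) * (- (real (card R) * (1 - \<delta>))))) * ennreal ((1 / sqrt (1 - 2 * (- (\<delta>/8)))) ^ card R)
      = ennreal (exp ((\<delta>/8) * (1 - \<delta>) * real (card R)) * (1 / sqrt (1 - 2 * (- (\<delta>/8)))) ^ card R)"
    using d by (simp add: ennreal_mult[symmetric] mult_ac)
  also have "\<dots> \<le> ennreal (exp (- \<delta>\<^sup>2 / 16 * real (card R)))"
    using d by (intro ennreal_leI pow_bound_aux lower_exp_aux) auto
  finally show ?thesis .
qed


lemma lin_tail_abs:
  assumes fin: "finite I" and JI: "J \<subseteq> I" and t: "t \<ge> 0"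
   and meas[measurable]: "\<And>j. j \<in> J \<Longrightarrow> coef j \<in> borel_measurable (GM I)"
   and dep: "\<And>j \<omega> \<omega>'. j \<in> J \<Longrightarrow> (\<And>h. h \<in> I - J \<Longrightarrow> \<omega> h = \<omega>' h) \<Longrightarrow> coef j \<omega> = coef j \<omega>'"
  shows "emeasure (GM I) {\<omega> \<in> space (GM I). t * sqrt (\<Sum>j\<in>J. (coef j \<omega>)\<^sup>2) < \<bar>\<Sum>j\<in>J. coef j \<omega> * \<omega> j\<bar>}
    \<le> ennreal (2 * exp (- t\<^sup>2 / 2))"
proof -
  let ?A = "{\<omega> \<in> space (GM I). t * sqrt (\<Sum>j\<in>J. (coef j \<omega>)\<^sup>2) < (\<Sum>j\<in>J. coef j \<omega> * \<omega> j)}"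
  let ?B = "{\<omega> \<in> space (GM I). t * sqrt (\<Sum>j\<in>J. ((\<lambda>j \<omega>. - coef j \<omega>) j \<omega>)\<^sup>2) < (\<Sum>j\<in>J. (\<lambda>j \<omega>. - coef j \<omega>) j \<omega> * \<omega> j)}"
  have fJ: "finite J" using fin JI by (rule finite_subset[rotated])
  have cm[measurable]: "(\<lambda>\<omega>. \<omega> j) \<in> borel_measurable (GM I)" if "j \<in> J" for j
  proof -
    have "j \<in> I" using that JI by auto
    then show ?thesis by measurable
  qed
  have A: "?A \<in> sets (GM I)" by measurable
  have B: "?B \<in> sets (GM I)" by measurable
  have eq: "{\<omega> \<in> space (GM I). t * sqrt (\<Sum>j\<in>J. (coef j \<omega>)\<^sup>2) < \<bar>\<Sum>j\<in>J. coef j \<omega> * \<omega> j\<bar>} = ?A \<union> ?B"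
    by (auto simp: sum_negf abs_if)
  have "emeasure (GM I) (?A \<union> ?B) \<le> emeasure (GM I) ?A + emeasure (GM I) ?B"
    by (rule emeasure_subadditive[OF A B])
  also have "\<dots> \<le> ennreal (exp (- t\<^sup>2 / 2)) + ennreal (exp (- t\<^sup>2 / 2))"
  proof (rule add_mono)
    show "emeasure (GM I) ?A \<le> ennreal (exp (- t\<^sup>2 / 2))" by (rule lin_tail[OF fin JI t meas dep])
    show "emeasure (GM I) ?B \<le> ennreal (exp (- t\<^sup>2 / 2))"
      by (rule lin_tail[OF fin JI t]) (simp, metis dep)
  qed
  also have "\<dots> = ennreal (2 * exp (- t\<^sup>2 / 2))" by (simp flip: ennreal_plus)
  finally show ?thesis unfolding eq .
qed

lemma lin_pair:
  fixes R :: "'r set" and C :: "'c set" and W :: "'r \<Rightarrow> ('r \<times> 'c \<Rightarrow> real) \<Rightarrow> real"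
  assumes fR: "finite R" and fC: "finite C" and u: "u \<in> C" and v: "v \<in> C" and uv: "u \<noteq> v" and t: "t \<ge> 0"
   and meas: "\<And>i. i \<in> R \<Longrightarrow> W i \<in> borel_measurable (GM (R \<times> C))"
   and dep: "\<And>i \<omega> \<omega>'. i \<in> R \<Longrightarrow> (\<And>i' j. i' \<in> R \<Longrightarrow> j \<in> C \<Longrightarrow> j \<noteq> u \<Longrightarrow> j \<noteq> v \<Longrightarrow> \<omega> (i', j) = \<omega>' (i', j)) \<Longrightarrow> W i \<omega> = W i \<omega>'"
  shows "emeasure (GM (R \<times> C)) {\<omega> \<in> space (GM (R \<times> C)).
      t * sqrt (2 * (\<Sum>i\<in>R. (W i \<omega>)\<^sup>2)) < \<bar>\<Sum>i\<in>R. (\<omega> (i, u) - \<omega> (i, v)) * W i \<omega>\<bar>}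
    \<le> ennreal (2 * exp (- t\<^sup>2 / 2))"
proof -
  define coef where "coef ij \<omega> = (if snd ij = u then W (fst ij) \<omega> else - W (fst ij) \<omega>)" for ij \<omega>
  have fI: "finite (R \<times> C)" using fR fC by simp
  have JI: "R \<times> {u, v} \<subseteq> R \<times> C" using u v by auto
  have s1: "(\<Sum>ij\<in>R \<times> {u, v}. coef ij \<omega> * \<omega> ij) = (\<Sum>i\<in>R. (\<omega> (i, u) - \<omega> (i, v)) * W i \<omega>)" for \<omega>
    unfolding sum.cartesian_product' using uv by (intro sum.cong refl) (simp add: coef_def algebra_simps)
  have s2: "(\<Sum>ij\<in>R \<times> {u, v}. (coef ij \<omega>)\<^sup>2) = 2 * (\<Sum>i\<in>R. (W i \<omega>)\<^sup>2)" for \<omega>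
    unfolding sum.cartesian_product' using uv by (simp add: coef_def sum_distrib_left)
  have "emeasure (GM (R \<times> C)) {\<omega> \<in> space (GM (R \<times> C)).
      t * sqrt (\<Sum>ij\<in>R \<times> {u, v}. (coef ij \<omega>)\<^sup>2) < \<bar>\<Sum>ij\<in>R \<times> {u, v}. coef ij \<omega> * \<omega> ij\<bar>}
    \<le> ennreal (2 * exp (- t\<^sup>2 / 2))"
  proof (rule lin_tail_abs[OF fI JI t])
    fix j assume j: "j \<in> R \<times> {u, v}"
    then have "fst j \<in> R" by auto
    then show "coef j \<in> borel_measurable (GM (R \<times> C))"
      unfolding coef_def using meas by (cases "snd j = u") auto
  next
    fix j and \<omega> \<omega>' :: "'r \<times> 'c \<Rightarrow> real" assume j: "j \<in> R \<times> {u, v}" and ag: "\<And>h. h \<in> R \<times> C - R \<times> {u, v} \<Longrightarrow> \<omega> h = \<omega>' h"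
    have "W (fst j) \<omega> = W (fst j) \<omega>'"
      using j by (intro dep) (auto intro: ag)
    then show "coef j \<omega> = coef j \<omega>'" unfolding coef_def by simp
  qed
  then show ?thesis unfolding s1 s2 .
qed

lemma lin_single:
  fixes R :: "'r set" and C :: "'c set" and W :: "'r \<Rightarrow> ('r \<times> 'c \<Rightarrow> real) \<Rightarrow> real"
  assumes fR: "finite R" and fC: "finite C" and v: "v \<in> C" and t: "t \<ge> 0"
   and meas: "\<And>i. i \<in> R \<Longrightarrow> W i \<in> borel_measurable (GM (R \<times> C))"
   and dep: "\<And>i \<omega> \<omega>'. i \<in> R \<Longrightarrow> (\<And>i' j. i' \<in> R \<Longrightarrow> j \<in> C \<Longrightarrow> j \<noteq> v \<Longrightarrow> \<omega> (i', j) = \<omega>' (i', j)) \<Longrightarrow> W i \<omega> = W i \<omega>'"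
  shows "emeasure (GM (R \<times> C)) {\<omega> \<in> space (GM (R \<times> C)).
      t * sqrt (\<Sum>i\<in>R. (W i \<omega>)\<^sup>2) < \<bar>\<Sum>i\<in>R. \<omega> (i, v) * W i \<omega>\<bar>}
    \<le> ennreal (2 * exp (- t\<^sup>2 / 2))"
proof -
  define coef where "coef ij \<omega> = W (fst ij) \<omega>" for ij :: "'r \<times> 'c" and \<omega>
  have fI: "finite (R \<times> C)" using fR fC by simp
  have JI: "R \<times> {v} \<subseteq> R \<times> C" using v by auto
  have s1: "(\<Sum>ij\<in>R \<times> {v}. coef ij \<omega> * \<omega> ij) = (\<Sum>i\<in>R. \<omega> (i, v) * W i \<omega>)" for \<omega>
    unfolding sum.cartesian_product' by (simp add: coef_def mult.commute)
  have s2: "(\<Sum>ij\<in>R \<times> {v}. (coef ij \<omega>)\<^sup>2) = (\<Sum>i\<in>R. (W i \<omega>)\<^sup>2)" for \<omega>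
    unfolding sum.cartesian_product' by (simp add: coef_def)
  have "emeasure (GM (R \<times> C)) {\<omega> \<in> space (GM (R \<times> C)).
      t * sqrt (\<Sum>ij\<in>R \<times> {v}. (coef ij \<omega>)\<^sup>2) < \<bar>\<Sum>ij\<in>R \<times> {v}. coef ij \<omega> * \<omega> ij\<bar>}
    \<le> ennreal (2 * exp (- t\<^sup>2 / 2))"
  proof (rule lin_tail_abs[OF fI JI t])
    fix j assume j: "j \<in> R \<times> {v}"
    then have "fst j \<in> R" by auto
    then show "coef j \<in> borel_measurable (GM (R \<times> C))"
      unfolding coef_def using meas by auto
  next
    fix j and \<omega> \<omega>' :: "'r \<times> 'c \<Rightarrow> real" assume j: "j \<in> R \<times> {v}" and ag: "\<And>h. h \<in> R \<times> C - R \<times> {v} \<Longrightarrow> \<omega> h = \<omega>' h"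
    show "coef j \<omega> = coef j \<omega>'"
      unfolding coef_def using j by (intro dep) (auto intro: ag)
  qed
  then show ?thesis unfolding s1 s2 .
qed

lemma sqrt12_le: "sqrt 12 \<le> (4::real)"
  by (rule real_le_lsqrt) auto

lemma sqrt48_le: "sqrt 48 \<le> (7::real)"
  by (rule real_le_lsqrt) auto

lemma det_combine:
  fixes N l \<gamma> S G Ckk Gn P E Q M ca cb z :: real
  assumes N: "N > 0" and l: "l \<ge> 0" and g: "\<gamma> > 0" and Ck: "Ckk \<ge> 0" and S: "Ckk + \<gamma> \<le> S" and G: "\<gamma> \<le> G"
    and H1: "\<bar>Gn - P\<bar> \<le> (sqrt \<gamma> * sqrt (6 * l) * sqrt 2) * (ca + cb)"
    and ca: "ca \<le> 2 * sqrt (N * S)" and cb: "cb \<le> 2 * sqrt (N * S)"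
    and H2: "P = E + \<gamma> * Q - \<gamma> * M"
    and H3: "\<bar>E\<bar> \<le> (sqrt \<gamma> * sqrt (6 * l) * sqrt 2) * z" and z: "z \<le> 2 * sqrt (N * Ckk)"
    and H4: "\<bar>Q - N\<bar> \<le> N * sqrt (48 * l / N)"
    and H5: "\<bar>M\<bar> \<le> sqrt (6 * l) * sqrt Q" and Q2: "Q \<le> 2 * N"
  shows "\<bar>Gn / N - \<gamma>\<bar> \<le> 35 * sqrt G * sqrt S * sqrt (l / N)"
proof -
  define r where "r = sqrt (l * N)"
  define \<tau> where "\<tau> = sqrt \<gamma> * sqrt (6 * l) * sqrt 2"
  have r0: "r \<ge> 0" using N l by (simp add: r_def)
  have tau0: "\<tau> \<ge> 0" using g l by (simp add: \<tau>_def)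
  have Sg: "\<gamma> \<le> S" "Ckk \<le> S" using S Ck g by auto
  have S0: "S \<ge> 0" using Sg g by simp
  have Q0: "Q \<ge> 0 \<or> True" by simp
  have "\<tau> * sqrt (N * S) = sqrt 12 * (sqrt (\<gamma> * S) * r)"
    unfolding \<tau>_def r_def
    by (simp add: real_sqrt_mult[symmetric] mult_ac)
  then have tauS: "\<tau> * sqrt (N * S) \<le> 4 * sqrt (\<gamma> * S) * r"
  proof -
    assume e: "\<tau> * sqrt (N * S) = sqrt 12 * (sqrt (\<gamma> * S) * r)"
    have X0: "0 \<le> sqrt (\<gamma> * S) * r" using r0 g S0 by (simp add: mult_nonneg_nonneg)
    have "sqrt 12 * (sqrt (\<gamma> * S) * r) \<le> 4 * (sqrt (\<gamma> * S) * r)"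
      by (rule mult_right_mono[OF sqrt12_le X0])
    then show ?thesis using e by (simp add: mult.assoc)
  qed
  have "sqrt (N * Ckk) \<le> sqrt (N * S)" using Sg N by (intro real_sqrt_le_mono mult_left_mono) auto
  then have zS: "z \<le> 2 * sqrt (N * S)" using z by linarith
  have t1: "\<bar>Gn - P\<bar> \<le> \<tau> * (4 * sqrt (N * S))"
  proof -
    have "ca + cb \<le> 4 * sqrt (N * S)" using ca cb by linarith
    then have "\<tau> * (ca + cb) \<le> \<tau> * (4 * sqrt (N * S))" by (rule mult_left_mono[OF _ tau0])
    then show ?thesis using H1 unfolding \<tau>_def[symmetric] by linarith
  qed
  have t2: "\<bar>E\<bar> \<le> \<tau> * (2 * sqrt (N * S))"
  proof -
    have "\<tau> * z \<le> \<tau> * (2 * sqrt (N * S))" by (rule mult_left_mono[OF zS tau0])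
    then show ?thesis using H3 unfolding \<tau>_def[symmetric] by linarith
  qed
  have "N * sqrt (48 * l / N) = sqrt 48 * r"
  proof -
    have "N * sqrt (48 * l / N) = sqrt (N\<^sup>2) * sqrt (48 * l / N)" using N by simp
    also have "\<dots> = sqrt (48 * (l * N))" unfolding real_sqrt_mult[symmetric] using N
      by (simp add: power2_eq_square field_simps)
    also have "\<dots> = sqrt 48 * r" by (simp add: r_def real_sqrt_mult)
    finally show ?thesis .
  qed
  then have t4: "\<gamma> * \<bar>Q - N\<bar> \<le> \<gamma> * (7 * r)"
  proof -
    assume e: "N * sqrt (48 * l / N) = sqrt 48 * r"
    have "sqrt 48 * r \<le> 7 * r" by (rule mult_right_mono[OF sqrt48_le r0])
    then have "\<bar>Q - N\<bar> \<le> 7 * r" using H4 e by linarith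
    then show ?thesis using g by (simp add: mult_left_mono)
  qed
  have "sqrt Q \<le> sqrt (2 * N)" using Q2 by simp
  then have "\<bar>M\<bar> \<le> sqrt (6 * l) * sqrt (2 * N)"
  proof -
    assume e: "sqrt Q \<le> sqrt (2 * N)"
    have "sqrt (6 * l) * sqrt Q \<le> sqrt (6 * l) * sqrt (2 * N)" by (rule mult_left_mono[OF e]) (use l in simp)
    then show ?thesis using H5 by linarith
  qed
  also have "sqrt (6 * l) * sqrt (2 * N) = sqrt 12 * r"
    unfolding r_def by (simp add: real_sqrt_mult[symmetric] mult_ac)
  finally have "\<bar>M\<bar> \<le> sqrt 12 * r" .
  moreover have "sqrt 12 * r \<le> 4 * r" by (rule mult_right_mono[OF sqrt12_le r0])
  ultimately have "\<bar>M\<bar> \<le> 4 * r" by linarith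
  then have t5: "\<gamma> * \<bar>M\<bar> \<le> \<gamma> * (4 * r)" using g by (simp add: mult_left_mono)
  have "\<bar>Gn - N * \<gamma>\<bar> \<le> \<bar>Gn - P\<bar> + \<bar>E\<bar> + \<gamma> * \<bar>Q - N\<bar> + \<gamma> * \<bar>M\<bar>"
  proof -
    have e: "Gn - N * \<gamma> = (Gn - P) + E + \<gamma> * (Q - N) - \<gamma> * M" using H2 by (simp add: algebra_simps)
    have a1: "\<bar>\<gamma> * (Q - N)\<bar> = \<gamma> * \<bar>Q - N\<bar>" "\<bar>\<gamma> * M\<bar> = \<gamma> * \<bar>M\<bar>" using g by (simp_all add: abs_mult)
    have "\<bar>(Gn - P) + E + \<gamma> * (Q - N) - \<gamma> * M\<bar> \<le> \<bar>Gn - P\<bar> + \<bar>E\<bar> + \<bar>\<gamma> * (Q - N)\<bar> + \<bar>\<gamma> * M\<bar>"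
      by arith
    then show ?thesis unfolding e a1 .
  qed
  also have "\<dots> \<le> 6 * (\<tau> * sqrt (N * S)) + 11 * \<gamma> * r"
    using t1 t2 t4 t5 by (simp add: algebra_simps)
  also have "\<dots> \<le> 24 * sqrt (\<gamma> * S) * r + 11 * \<gamma> * r"
    using tauS by linarith
  also have "\<dots> \<le> 35 * sqrt (G * S) * r"
  proof -
    have "\<gamma> = sqrt (\<gamma> * \<gamma>)" using g by simp
    also have "\<dots> \<le> sqrt (\<gamma> * S)" using g Sg by (intro real_sqrt_le_mono mult_left_mono) auto
    finally have a: "\<gamma> \<le> sqrt (\<gamma> * S)" .
    have b: "sqrt (\<gamma> * S) \<le> sqrt (G * S)" using G S0 by (intro real_sqrt_le_mono mult_right_mono) auto
    have "24 * sqrt (\<gamma> * S) + 11 * \<gamma> \<le> 35 * sqrt (G * S)" using a b by linarith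
    then have "(24 * sqrt (\<gamma> * S) + 11 * \<gamma>) * r \<le> (35 * sqrt (G * S)) * r" by (rule mult_right_mono[OF _ r0])
    then show ?thesis by (simp add: algebra_simps)
  qed
  finally have main: "\<bar>Gn - N * \<gamma>\<bar> \<le> 35 * sqrt (G * S) * r" .
  have "\<bar>Gn / N - \<gamma>\<bar> = \<bar>Gn - N * \<gamma>\<bar> / N" using N
  proof -
    have "Gn / N - \<gamma> = (Gn - N * \<gamma>) / N" using N by (simp add: field_simps)
    then show ?thesis using N by (simp add: abs_divide)
  qed
  also have "\<dots> \<le> 35 * sqrt (G * S) * r / N" using main N by (simp add: divide_right_mono)
  also have "r / N = sqrt (l / N)"
  proof -
    have "r / N = sqrt (l * N) / sqrt (N\<^sup>2)" using N by (simp add: r_def)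
    also have "\<dots> = sqrt (l / N)" unfolding real_sqrt_divide[symmetric] using N by (simp add: power2_eq_square)
    finally show ?thesis .
  qed
  then have "35 * sqrt (G * S) * r / N = 35 * sqrt G * sqrt S * sqrt (l / N)"
  proof -
    assume e: "r / N = sqrt (l / N)"
    have "35 * sqrt (G * S) * r / N = 35 * sqrt (G * S) * (r / N)" by simp
    then show ?thesis unfolding e by (simp add: real_sqrt_mult)
  qed
  finally show ?thesis .
qed

definition Zl :: "(nat \<Rightarrow> nat \<Rightarrow> real) \<Rightarrow> nat \<Rightarrow> (nat \<times> nat \<Rightarrow> real) \<Rightarrow> nat \<Rightarrow> nat \<Rightarrow> real" where
  "Zl L K \<omega> i k = (\<Sum>j<K. L k j * \<omega> (i, j))"

lemma Xdat_Zl: "Xdat L grp \<gamma> K \<omega> i a = Zl L K \<omega> i (grp a) + sqrt (\<gamma> (grp a)) * \<omega> (i, K + a)"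
  by (simp add: Xdat_def Zl_def)

lemma coord_meas:
  assumes "i < n" "j < K + p"
  shows "(\<lambda>\<omega>. \<omega> (i, j)) \<in> borel_measurable (GM ({..<n} \<times> {..<K + p}))"
proof -
  have "(i, j) \<in> {..<n} \<times> {..<K + p}" using assms by auto
  then show ?thesis by measurable
qed

lemma Zl_meas:
  assumes "i < n"
  shows "(\<lambda>\<omega>. Zl L K \<omega> i k) \<in> borel_measurable (GM ({..<n} \<times> {..<K + p}))"
  unfolding Zl_def using assms
  by (intro borel_measurable_sum borel_measurable_times borel_measurable_const coord_meas) auto

lemma Xdat_meas:
  assumes "i < n" "c < p"
  shows "(\<lambda>\<omega>. Xdat L grp \<gamma> K \<omega> i c) \<in> borel_measurable (GM ({..<n} \<times> {..<K + p}))"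
  unfolding Xdat_Zl using assms
  by (intro borel_measurable_add borel_measurable_times borel_measurable_const coord_meas Zl_meas) auto

definition acol :: "(nat \<Rightarrow> nat \<Rightarrow> real) \<Rightarrow> real \<Rightarrow> nat \<Rightarrow> nat \<Rightarrow> nat \<Rightarrow> nat \<Rightarrow> real" where
  "acol L g K k c j = (if j < K then L k j else 0) + (if j = K + c then sqrt g else 0)"

lemma acol_lin:
  "(\<Sum>j<K + p. acol L g K k c j * \<omega> (i, j)) = (\<Sum>j<K. L k j * \<omega> (i, j)) + (if c < p then sqrt g * \<omega> (i, K + c) else 0)"
proof -
  have "(\<Sum>j<K + p. acol L g K k c j * \<omega> (i, j)) =
      (\<Sum>j<K + p. (if j < K then L k j * \<omega> (i, j) else 0)) + (\<Sum>j<K + p. (if j = K + c then sqrt g * \<omega> (i, j) else 0))"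
    unfolding sum.distrib[symmetric] acol_def by (intro sum.cong refl) (auto simp: distrib_right)
  also have "(\<Sum>j<K + p. (if j < K then L k j * \<omega> (i, j) else 0)) = (\<Sum>j<K. L k j * \<omega> (i, j))"
    by (simp add: sum.inter_filter[symmetric]) (intro sum.cong, auto)
  also have "(\<Sum>j<K + p. (if j = K + c then sqrt g * \<omega> (i, j) else 0)) = (if c < p then sqrt g * \<omega> (i, K + c) else 0)"
    by (simp add: sum.delta')
  finally show ?thesis .
qed

lemma acol_sq:
  assumes "c < p"
  shows "(\<Sum>j<K + p. (acol L g K k c j)\<^sup>2) = (\<Sum>j<K. L k j * L k j) + (if g \<ge> 0 then g else (sqrt g)\<^sup>2)"
proof -
  have "(\<Sum>j<K + p. (acol L g K k c j)\<^sup>2) =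
      (\<Sum>j<K + p. (if j < K then L k j * L k j else 0)) + (\<Sum>j<K + p. (if j = K + c then (sqrt g)\<^sup>2 else 0))"
    unfolding sum.distrib[symmetric] acol_def by (intro sum.cong refl) (auto simp: power2_eq_square)
  also have "(\<Sum>j<K + p. (if j < K then L k j * L k j else 0)) = (\<Sum>j<K. L k j * L k j)"
    by (simp add: sum.inter_filter[symmetric]) (intro sum.cong, auto)
  also have "(\<Sum>j<K + p. (if j = K + c then (sqrt g)\<^sup>2 else 0)) = (sqrt g)\<^sup>2"
    using assms by (simp add: sum.delta')
  finally show ?thesis by simp
qed


lemma col_norm_zero:
  assumes "col_norm n X c = 0" "i < n"
  shows "X i c = 0"
proof -
  have "(\<Sum>i<n. (X i c)\<^sup>2) = 0" using assms(1) unfolding col_norm_def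
    by (simp add: sum_nonneg)
  then have "\<forall>i\<in>{..<n}. (X i c)\<^sup>2 = 0" by (subst sum_nonneg_eq_0_iff[symmetric]) auto
  then show ?thesis using assms(2) by auto
qed

lemma col_norm_nonneg: "col_norm n X c \<ge> 0"
  unfolding col_norm_def by (simp add: sum_nonneg)

lemma crit_le:
  assumes tau: "\<tau> \<ge> 0"
    and H: "\<And>c. c < p \<Longrightarrow> c \<noteq> a \<Longrightarrow> c \<noteq> b \<Longrightarrow> \<bar>\<Sum>i<n. (X i a - X i b) * X i c\<bar> \<le> \<tau> * col_norm n X c"
  shows "ne_crit n p X a b \<le> \<tau>"
  unfolding ne_crit_def
proof (subst Max_le_iff)
  show "finite (insert 0 ((\<lambda>c. \<bar>(\<Sum>i<n. (X i a - X i b) * X i c) / col_norm n X c\<bar>) ` {c. c < p \<and> c \<noteq> a \<and> c \<noteq> b}))"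
    by simp
  show "\<forall>x\<in>insert 0 ((\<lambda>c. \<bar>(\<Sum>i<n. (X i a - X i b) * X i c) / col_norm n X c\<bar>) ` {c. c < p \<and> c \<noteq> a \<and> c \<noteq> b}). x \<le> \<tau>"
  proof (intro ballI)
    fix x assume "x \<in> insert 0 ((\<lambda>c. \<bar>(\<Sum>i<n. (X i a - X i b) * X i c) / col_norm n X c\<bar>) ` {c. c < p \<and> c \<noteq> a \<and> c \<noteq> b})"
    then consider "x = 0" | c where "c < p" "c \<noteq> a" "c \<noteq> b" "x = \<bar>(\<Sum>i<n. (X i a - X i b) * X i c) / col_norm n X c\<bar>"
      by auto
    then show "x \<le> \<tau>"
    proof cases
      case 1 then show ?thesis using tau by simp
    next
      case 2
      show ?thesis
      proof (cases "col_norm n X c = 0")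
        case True then show ?thesis using 2 tau by simp
      next
        case False
        then have pos: "col_norm n X c > 0" using col_norm_nonneg[of n X c] by simp
        have "x = \<bar>\<Sum>i<n. (X i a - X i b) * X i c\<bar> / col_norm n X c" using 2 pos by (simp add: abs_divide)
        also have "\<dots> \<le> \<tau>" using H[OF 2(1-3)] pos by (simp add: divide_le_eq)
        finally show ?thesis .
      qed
    qed
  qed
qed simp

lemma crit_nonneg: "ne_crit n p X a b \<ge> 0"
  unfolding ne_crit_def by (rule Max_ge_iff[THEN iffD2]) auto

lemma crit_ge:
  assumes c: "c < p" "c \<noteq> a" "c \<noteq> b"
  shows "\<bar>\<Sum>i<n. (X i a - X i b) * X i c\<bar> \<le> ne_crit n p X a b * col_norm n X c"
proof (cases "col_norm n X c = 0")
  case True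
  then have "\<And>i. i < n \<Longrightarrow> X i c = 0" using col_norm_zero by blast
  then have "(\<Sum>i<n. (X i a - X i b) * X i c) = 0" by simp
  then show ?thesis using True by simp
next
  case False
  then have pos: "col_norm n X c > 0" using col_norm_nonneg[of n X c] by simp
  have "\<bar>(\<Sum>i<n. (X i a - X i b) * X i c) / col_norm n X c\<bar> \<le> ne_crit n p X a b"
    unfolding ne_crit_def by (rule Max_ge) (use c in auto)
  then have "\<bar>\<Sum>i<n. (X i a - X i b) * X i c\<bar> / col_norm n X c \<le> ne_crit n p X a b"
    using pos by (simp add: abs_divide)
  then show ?thesis using pos by (simp add: divide_le_eq)
qed

lemma mat_sup_ge:
  assumes "a < p" "b < p"
  shows "\<bar>M a b\<bar> \<le> mat_sup p M"
  unfolding mat_sup_def by (rule Max_ge) (use assms in auto)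

lemma mat_sup_le:
  assumes "0 < p" "\<And>a b. a < p \<Longrightarrow> b < p \<Longrightarrow> \<bar>M a b\<bar> \<le> B"
  shows "mat_sup p M \<le> B"
  unfolding mat_sup_def using assms by (subst Max_le_iff) auto

lemma diag_V_le:
  assumes p: "0 < p"
  shows "diag_V p D \<le> 2 * mat_sup p (\<lambda>a b. if a = b then D a else 0)"
proof -
  let ?S = "mat_sup p (\<lambda>a b. if a = b then D a else 0)"
  have d: "\<bar>D a\<bar> \<le> ?S" if "a < p" for a
    using mat_sup_ge[OF that that, of "\<lambda>a b. if a = b then D a else 0"] by simp
  have ne: "D ` {..<p} \<noteq> {}" using p by auto
  have "Max (D ` {..<p}) \<in> D ` {..<p}" by (rule Max_in) (use ne in auto)
  then obtain a1 where a1: "a1 < p" "Max (D ` {..<p}) = D a1" by auto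
  have "Min (D ` {..<p}) \<in> D ` {..<p}" by (rule Min_in) (use ne in auto)
  then obtain a2 where a2: "a2 < p" "Min (D ` {..<p}) = D a2" by auto
  show ?thesis unfolding diag_V_def a1(2) a2(2) using d[OF a1(1)] d[OF a2(1)] by linarith
qed

lemma partner_exists:
  assumes "2 \<le> card {b. b < p \<and> grp b = grp a}" "a < p"
  shows "\<exists>b. b < p \<and> b \<noteq> a \<and> grp b = grp a"
proof (rule ccontr)
  assume "\<not> ?thesis"
  then have "{b. b < p \<and> grp b = grp a} \<subseteq> {a}" by auto
  then have "card {b. b < p \<and> grp b = grp a} \<le> 1" using card_mono[of "{a}"] by fastforce
  then show False using assms by simp
qed

lemma meas_le: "emeasure M A \<le> ennreal B \<Longrightarrow> 0 \<le> B \<Longrightarrow> measure M A \<le> B"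
  unfolding measure_def by (rule enn2real_leI)

lemma pow3_exp:
  assumes "p \<ge> (2::nat)"
  shows "exp (- (3 * ln (real p))) = 1 / real p ^ 3"
proof -
  have "exp (3 * ln (real p)) = exp (ln (real p)) ^ 3" by (simp add: exp_of_nat_mult[symmetric])
  also have "\<dots> = real p ^ 3" using assms by simp
  finally show ?thesis by (simp add: exp_minus inverse_eq_divide)
qed

lemma dot_scale: "(\<Sum>i<n. (s * (f i - g i)) * h i) = (s::real) * (\<Sum>i<n. (f i - g i) * h i)"
  by (simp add: sum_distrib_left mult_ac)


lemma det_a:
  fixes n p K :: nat and grp :: "nat \<Rightarrow> nat" and \<gamma> :: "nat \<Rightarrow> real" and C L :: "nat \<Rightarrow> nat \<Rightarrow> real"
    and \<omega> :: "nat \<times> nat \<Rightarrow> real" and l S G :: real and a a' :: nat and ne :: "nat \<Rightarrow> nat"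
  defines "X \<equiv> Xdat L grp \<gamma> K \<omega>"
  assumes a: "a < p" and a': "a' < p" "a' \<noteq> a" "grp a' = grp a"
    and gk: "\<gamma> (grp a) > 0"
    and Ckk: "C (grp a) (grp a) = (\<Sum>j<K. L (grp a) j * L (grp a) j)"
    and l: "l \<ge> 0" and n0: "n > 0"
    and G1: "\<And>c. c < p \<Longrightarrow> c \<noteq> a \<Longrightarrow> c \<noteq> a' \<Longrightarrow>
        \<bar>\<Sum>i<n. (\<omega> (i, K + a) - \<omega> (i, K + a')) * X i c\<bar> \<le> sqrt (6 * l) * sqrt (2 * (\<Sum>i<n. (X i c)\<^sup>2))"
    and G2: "\<bar>\<Sum>i<n. (\<omega> (i, K + a) - \<omega> (i, K + a')) * Zl L K \<omega> i (grp a)\<bar>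
        \<le> sqrt (6 * l) * sqrt (2 * (\<Sum>i<n. (Zl L K \<omega> i (grp a))\<^sup>2))"
    and G3: "\<bar>\<Sum>i<n. \<omega> (i, K + a') * \<omega> (i, K + a)\<bar> \<le> sqrt (6 * l) * sqrt (\<Sum>i<n. (\<omega> (i, K + a))\<^sup>2)"
    and G4: "\<And>c. c < p \<Longrightarrow> (\<Sum>i<n. (X i c)\<^sup>2) \<le> 4 * real n * S"
    and G5: "(\<Sum>i<n. (Zl L K \<omega> i (grp a))\<^sup>2) \<le> 4 * real n * C (grp a) (grp a)"
    and G6: "\<bar>(\<Sum>i<n. (\<omega> (i, K + a))\<^sup>2) - real n\<bar> \<le> real n * sqrt (48 * l / real n)"
    and G7: "(\<Sum>i<n. (\<omega> (i, K + a))\<^sup>2) \<le> 2 * real n"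
    and isne: "is_ne n p X ne"
    and S: "C (grp a) (grp a) + \<gamma> (grp a) \<le> S" and G: "\<gamma> (grp a) \<le> G"
  shows "\<bar>Gamma_check n X ne a - \<gamma> (grp a)\<bar> \<le> 35 * sqrt G * sqrt S * sqrt (l / real n)"
proof -
  define k where "k = grp a"
  define g where "g = \<gamma> k"
  define sg where "sg = sqrt g"
  define \<tau> where "\<tau> = sg * sqrt (6 * l) * sqrt 2"
  define Dv where "Dv i = sg * (\<omega> (i, K + a) - \<omega> (i, K + a'))" for i
  define cn where "cn c = col_norm n X c" for c
  have g0: "g > 0" using gk by (simp add: g_def k_def)
  have sg2: "sg * sg = g" using g0 by (simp add: sg_def)
  have sg0: "sg \<ge> 0" using g0 by (simp add: sg_def)
  have tau0: "\<tau> \<ge> 0" using l sg0 by (simp add: \<tau>_def)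
  have cn0: "cn c \<ge> 0" for c by (simp add: cn_def col_norm_nonneg)
  have Ck0: "C k k \<ge> 0" using Ckk by (simp add: k_def sum_nonneg)
  have XD: "X i a - X i a' = Dv i" for i
    unfolding X_def Xdat_Zl Dv_def sg_def g_def k_def using a'(3) by (simp add: algebra_simps)
  have scale: "(\<Sum>i<n. Dv i * h i) = sg * (\<Sum>i<n. (\<omega> (i, K + a) - \<omega> (i, K + a')) * h i)" for h
    unfolding Dv_def by (rule dot_scale)
  have F1: "\<bar>\<Sum>i<n. Dv i * X i c\<bar> \<le> \<tau> * cn c" if c: "c < p" "c \<noteq> a" "c \<noteq> a'" for c
  proof -
    have "\<bar>\<Sum>i<n. Dv i * X i c\<bar> = sg * \<bar>\<Sum>i<n. (\<omega> (i, K + a) - \<omega> (i, K + a')) * X i c\<bar>"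
      unfolding scale using sg0 by (simp add: abs_mult)
    also have "\<dots> \<le> sg * (sqrt (6 * l) * sqrt (2 * (\<Sum>i<n. (X i c)\<^sup>2)))"
      by (rule mult_left_mono[OF G1[OF c] sg0])
    also have "\<dots> = \<tau> * cn c" unfolding \<tau>_def cn_def col_norm_def by (simp add: real_sqrt_mult)
    finally show ?thesis .
  qed
  have cnb: "cn c \<le> 2 * sqrt (real n * S)" if "c < p" for c
  proof -
    have "cn c \<le> sqrt (4 * real n * S)" unfolding cn_def col_norm_def using G4[OF that] by simp
    also have "\<dots> = 2 * sqrt (real n * S)" by (simp add: real_sqrt_mult mult.assoc)
    finally show ?thesis .
  qed
  have crit_a': "ne_crit n p X a a' \<le> \<tau>"
  proof (rule crit_le[OF tau0])
    fix c assume c: "c < p" "c \<noteq> a" "c \<noteq> a'"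
    show "\<bar>\<Sum>i<n. (X i a - X i a') * X i c\<bar> \<le> \<tau> * col_norm n X c"
      using F1[OF c] unfolding XD cn_def .
  qed
  define b where "b = ne a"
  have b: "b < p" "b \<noteq> a" "ne_crit n p X a b \<le> ne_crit n p X a a'"
    using isne a a' unfolding is_ne_def b_def by auto
  define Gn where "Gn = (\<Sum>i<n. (X i a - X i b) * X i a)"
  define P where "P = (\<Sum>i<n. X i a * Dv i)"
  define E where "E = (\<Sum>i<n. Zl L K \<omega> i k * Dv i)"
  define Q where "Q = (\<Sum>i<n. (\<omega> (i, K + a))\<^sup>2)"
  define M where "M = (\<Sum>i<n. \<omega> (i, K + a') * \<omega> (i, K + a))"
  define z where "z = sqrt (\<Sum>i<n. (Zl L K \<omega> i k)\<^sup>2)"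
  have H1: "\<bar>Gn - P\<bar> \<le> \<tau> * (cn a' + cn b)"
  proof (cases "b = a'")
    case True
    have "Gn = P" unfolding Gn_def P_def True XD by (simp add: mult.commute)
    then show ?thesis using tau0 cn0 by simp
  next
    case False
    have e: "Gn - P = (\<Sum>i<n. (X i a - X i b) * X i a') - (\<Sum>i<n. Dv i * X i b)"
    proof -
      have "(X i a - X i b) * X i a = (X i a - X i b) * X i a' + X i a * Dv i - Dv i * X i b" for i
        using XD[of i] by (simp add: algebra_simps)
      then show ?thesis unfolding Gn_def P_def by (simp add: sum_subtractf sum.distrib)
    qed
    have t1: "\<bar>\<Sum>i<n. (X i a - X i b) * X i a'\<bar> \<le> \<tau> * cn a'"
    proof -
      have "\<bar>\<Sum>i<n. (X i a - X i b) * X i a'\<bar> \<le> ne_crit n p X a b * cn a'"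
        unfolding cn_def by (rule crit_ge) (use a' False in auto)
      also have "\<dots> \<le> \<tau> * cn a'" using b(3) crit_a' cn0 by (intro mult_right_mono) auto
      finally show ?thesis .
    qed
    have t2: "\<bar>\<Sum>i<n. Dv i * X i b\<bar> \<le> \<tau> * cn b" by (rule F1) (use b False in auto)
    show ?thesis unfolding e using t1 t2 by (simp add: distrib_left)
  qed
  have H2: "P = E + g * Q - g * M"
  proof -
    have "X i a * Dv i = Zl L K \<omega> i k * Dv i + g * (\<omega> (i, K + a))\<^sup>2 - g * (\<omega> (i, K + a') * \<omega> (i, K + a))" for i
    proof -
      have "X i a = Zl L K \<omega> i k + sg * \<omega> (i, K + a)" unfolding X_def Xdat_Zl sg_def g_def k_def ..
      moreover have "(Zl L K \<omega> i k + sg * \<omega> (i, K + a)) * (sg * (\<omega> (i, K + a) - \<omega> (i, K + a')))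
          = Zl L K \<omega> i k * (sg * (\<omega> (i, K + a) - \<omega> (i, K + a'))) + (sg * sg) * (\<omega> (i, K + a))\<^sup>2
            - (sg * sg) * (\<omega> (i, K + a') * \<omega> (i, K + a))"
        by (simp add: algebra_simps power2_eq_square)
      ultimately show ?thesis unfolding Dv_def sg2 by simp
    qed
    then show ?thesis unfolding P_def E_def Q_def M_def
      by (simp add: sum_subtractf sum.distrib sum_distrib_left)
  qed
  have H3: "\<bar>E\<bar> \<le> \<tau> * z"
  proof -
    have "E = sg * (\<Sum>i<n. (\<omega> (i, K + a) - \<omega> (i, K + a')) * Zl L K \<omega> i k)"
      unfolding E_def scale[symmetric] by (simp add: mult.commute)
    then have "\<bar>E\<bar> = sg * \<bar>\<Sum>i<n. (\<omega> (i, K + a) - \<omega> (i, K + a')) * Zl L K \<omega> i k\<bar>"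
      using sg0 by (simp add: abs_mult)
    also have "\<dots> \<le> sg * (sqrt (6 * l) * sqrt (2 * (\<Sum>i<n. (Zl L K \<omega> i k)\<^sup>2)))"
      by (rule mult_left_mono[OF G2[unfolded k_def[symmetric]] sg0])
    also have "\<dots> = \<tau> * z" unfolding \<tau>_def z_def by (simp add: real_sqrt_mult)
    finally show ?thesis .
  qed
  have zb: "z \<le> 2 * sqrt (real n * C k k)"
  proof -
    have "z \<le> sqrt (4 * real n * C k k)" unfolding z_def using G5 by (simp add: k_def)
    also have "\<dots> = 2 * sqrt (real n * C k k)" by (simp add: real_sqrt_mult mult.assoc)
    finally show ?thesis .
  qed
  have main: "\<bar>Gn / real n - g\<bar> \<le> 35 * sqrt G * sqrt S * sqrt (l / real n)"
  proof (rule det_combine[where Ckk = "C k k" and P = P and E = E and Q = Q and M = M and ca = "cn a'" and cb = "cn b" and z = z])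
    show "real n > 0" using n0 by simp
    show "l \<ge> 0" by (rule l)
    show "g > 0" by (rule g0)
    show "C k k \<ge> 0" by (rule Ck0)
    show "C k k + g \<le> S" using S by (simp add: g_def k_def)
    show "g \<le> G" using G by (simp add: g_def k_def)
    show "\<bar>Gn - P\<bar> \<le> sqrt g * sqrt (6 * l) * sqrt 2 * (cn a' + cn b)" using H1 by (simp add: \<tau>_def sg_def)
    show "cn a' \<le> 2 * sqrt (real n * S)" by (rule cnb[OF a'(1)])
    show "cn b \<le> 2 * sqrt (real n * S)" by (rule cnb[OF b(1)])
    show "P = E + g * Q - g * M" by (rule H2)
    show "\<bar>E\<bar> \<le> sqrt g * sqrt (6 * l) * sqrt 2 * z" using H3 by (simp add: \<tau>_def sg_def)
    show "z \<le> 2 * sqrt (real n * C k k)" by (rule zb)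
    show "\<bar>Q - real n\<bar> \<le> real n * sqrt (48 * l / real n)" using G6 by (simp add: Q_def)
    show "\<bar>M\<bar> \<le> sqrt (6 * l) * sqrt Q" using G3 by (simp add: M_def Q_def)
    show "Q \<le> 2 * real n" using G7 by (simp add: Q_def)
  qed
  have "Gamma_check n X ne a = Gn / real n" unfolding Gamma_check_def Gn_def b_def by simp
  then show ?thesis using main by (simp add: g_def k_def)
qed

lemma coord_meas_all[measurable]: "(\<lambda>\<omega>. \<omega> x) \<in> borel_measurable (GM I)"
proof (cases "x \<in> I")
  case True then show ?thesis by measurable
next
  case False
  have eq: "\<omega> x = undefined" if "\<omega> \<in> space (GM I)" for \<omega> :: "'a \<Rightarrow> real"
    using that False by (auto simp: space_PiM PiE_def extensional_def)
  show ?thesis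
    by (subst measurable_cong[OF eq]) simp_all
qed

lemma Xdat_meas_all[measurable]: "(\<lambda>\<omega>. Xdat L grp \<gamma> K \<omega> i c) \<in> borel_measurable (GM I)"
  unfolding Xdat_def by measurable

lemma Zl_meas_all[measurable]: "(\<lambda>\<omega>. Zl L K \<omega> i k) \<in> borel_measurable (GM I)"
  unfolding Zl_def by measurable

lemma un_le: "A \<in> sets M \<Longrightarrow> B \<in> sets M \<Longrightarrow> measure M A \<le> x \<Longrightarrow> measure M B \<le> y \<Longrightarrow> measure M (A \<union> B) \<le> x + y"
  using measure_Un_le[of A M B] by linarith

lemma main_lemma:
  fixes n p K :: nat and grp :: "nat \<Rightarrow> nat" and \<gamma> :: "nat \<Rightarrow> real" and C L :: "nat \<Rightarrow> nat \<Rightarrow> real"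
  assumes K0: "0 < K" and grpK: "\<forall>a<p. grp a < K" and m2: "\<forall>k<K. 2 \<le> card {a. a < p \<and> grp a = k}"
    and gpos: "\<forall>k<K. 0 < \<gamma> k" and CL: "\<forall>k<K. \<forall>l<K. C k l = (\<Sum>j<K. L k j * L l j)"
    and lnp: "ln (real p) \<le> 1/48 * real n"
  shows "\<exists>A \<in> sets (data_space n K p).
        measure (data_space n K p) A \<ge> 1 - 10 / real p \<and>
        (\<forall>\<omega>\<in>A. \<forall>ne. is_ne n p (Xdat L grp \<gamma> K \<omega>) ne \<longrightarrow>
           (let X = Xdat L grp \<gamma> K \<omega>;
                D = (\<lambda>a. Gamma_check n X ne a - \<gamma> (grp a));
                Dinf = mat_sup p (\<lambda>a b. if a = b then D a else 0);
                Ginf = mat_sup p (\<lambda>a b. if a = b then \<gamma> (grp a) else 0);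
                Sinf = mat_sup p (Sigma_mat grp C \<gamma>)
            in diag_V p D \<le> 2 * Dinf \<and>
               2 * Dinf \<le> 80 * sqrt Ginf * sqrt Sinf * sqrt (ln (real p) / real n)))"
proof -
  define M where "M = GM ({..<n} \<times> {..<K + p})"
  have DS: "data_space n K p = M" unfolding M_def data_space_def ..
  have psM: "prob_space M" unfolding M_def by (rule prob_space_GM)
  have fR: "finite {..<n}" and fC: "finite {..<K + p}" by auto
  have p2: "p \<ge> 2"
  proof -
    have "2 \<le> card {a. a < p \<and> grp a = 0}" using m2 K0 by auto
    moreover have "card {a. a < p \<and> grp a = 0} \<le> card {..<p}" by (rule card_mono) auto
    ultimately show ?thesis by simp
  qed
  define lp where "lp = ln (real p)"
  have l0: "lp > 0" using p2 by (simp add: lp_def)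
  have ln48: "48 * lp \<le> real n" using lnp by (simp add: lp_def)
  have n0: "n > 0" using l0 ln48 by (cases n) auto
  have "\<forall>a. \<exists>b. a < p \<longrightarrow> b < p \<and> b \<noteq> a \<and> grp b = grp a"
  proof
    fix a
    show "\<exists>b. a < p \<longrightarrow> b < p \<and> b \<noteq> a \<and> grp b = grp a"
    proof (cases "a < p")
      case True
      then obtain b where "b < p \<and> b \<noteq> a \<and> grp b = grp a"
        using partner_exists[of p grp a] m2 grpK by auto
      then show ?thesis by blast
    qed simp
  qed
  then obtain \<pi> where \<pi>: "\<And>a. a < p \<Longrightarrow> \<pi> a < p \<and> \<pi> a \<noteq> a \<and> grp (\<pi> a) = grp a"
    by metis
  define t where "t = sqrt (6 * lp)"
  define \<delta> where "\<delta> = sqrt (48 * lp / real n)"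
  define \<epsilon> where "\<epsilon> = 1 / real p ^ 3"
  have eps0: "\<epsilon> \<ge> 0" by (simp add: \<epsilon>_def)
  have t0: "t \<ge> 0" using l0 by (simp add: t_def)
  have et: "exp (- t\<^sup>2 / 2) = \<epsilon>"
  proof -
    have "- t\<^sup>2 / 2 = - (3 * ln (real p))" using l0 by (simp add: t_def lp_def)
    then show ?thesis using pow3_exp[OF p2] by (simp add: \<epsilon>_def)
  qed
  have d01: "0 \<le> \<delta>" "\<delta> \<le> 1" using l0 ln48 n0 by (auto simp: \<delta>_def)
  have ed: "exp (- \<delta>\<^sup>2 / 16 * real n) = \<epsilon>"
  proof -
    have "- \<delta>\<^sup>2 / 16 * real n = - (3 * ln (real p))" using l0 n0 by (simp add: \<delta>_def lp_def)
    then show ?thesis using pow3_exp[OF p2] by (simp add: \<epsilon>_def)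
  qed
  have en: "exp (- real n / 2) \<le> \<epsilon>"
  proof -
    have "- real n / 2 \<le> - (3 * ln (real p))" using ln48 l0 by (simp add: lp_def)
    then have "exp (- real n / 2) \<le> exp (- (3 * ln (real p)))" by simp
    then show ?thesis using pow3_exp[OF p2] by (simp add: \<epsilon>_def)
  qed
  have en': "exp (- real (card {..<n}) / 2) \<le> \<epsilon>" using en by simp
  have ed': "exp (- \<delta>\<^sup>2 / 16 * real (card {..<n})) = \<epsilon>" using ed by simp
  have ccoord: "(\<lambda>\<omega>. \<omega> (i, j)) \<in> borel_measurable M" if "i < n" "j < K + p" for i j
    unfolding M_def using that by (rule coord_meas)
  define B1 where "B1 a c = {\<omega> \<in> space M. t * sqrt (2 * (\<Sum>i<n. (Xdat L grp \<gamma> K \<omega> i c)\<^sup>2))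
      < \<bar>\<Sum>i<n. (\<omega> (i, K + a) - \<omega> (i, K + \<pi> a)) * Xdat L grp \<gamma> K \<omega> i c\<bar>}" for a c
  define B2 where "B2 a = {\<omega> \<in> space M. t * sqrt (2 * (\<Sum>i<n. (Zl L K \<omega> i (grp a))\<^sup>2))
      < \<bar>\<Sum>i<n. (\<omega> (i, K + a) - \<omega> (i, K + \<pi> a)) * Zl L K \<omega> i (grp a)\<bar>}" for a
  define B3 where "B3 a = {\<omega> \<in> space M. t * sqrt (\<Sum>i<n. (\<omega> (i, K + a))\<^sup>2)
      < \<bar>\<Sum>i<n. \<omega> (i, K + \<pi> a) * \<omega> (i, K + a)\<bar>}" for a
  define Bq where "Bq k g c = {\<omega> \<in> space M. 4 * real (card {..<n}) * (\<Sum>j<K + p. (acol L g K k c j)\<^sup>2)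
      < (\<Sum>i<n. (\<Sum>j<K + p. acol L g K k c j * \<omega> (i, j))\<^sup>2)}" for k g c
  define B6 where "B6 a = {\<omega> \<in> space M. real (card {..<n}) * (1 + \<delta>) < (\<Sum>i<n. (\<omega> (i, K + a))\<^sup>2)}" for a
  define B7 where "B7 a = {\<omega> \<in> space M. (\<Sum>i<n. (\<omega> (i, K + a))\<^sup>2) < real (card {..<n}) * (1 - \<delta>)}" for a
  define Ba where "Ba a = B2 a \<union> B3 a \<union> Bq (grp a) (\<gamma> (grp a)) a \<union> Bq (grp a) 0 0 \<union> B6 a \<union> B7 a" for a
  define F where "F x = (if snd x = fst x then Ba (fst x) else B1 (fst x) (snd x))" for x
  define Ix where "Ix = {x \<in> {..<p} \<times> {..<p}. snd x \<noteq> \<pi> (fst x)}"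
  define Bad where "Bad = (\<Union>x\<in>Ix. F x)"
  define A where "A = space M - Bad"
  have sB1: "B1 a c \<in> sets M" for a c unfolding B1_def M_def by measurable
  have sB2: "B2 a \<in> sets M" for a unfolding B2_def M_def by measurable
  have sB3: "B3 a \<in> sets M" for a unfolding B3_def M_def by measurable
  have sBq: "Bq k g c \<in> sets M" for k g c unfolding Bq_def M_def by measurable
  have sB6: "B6 a \<in> sets M" for a unfolding B6_def M_def by measurable
  have sB7: "B7 a \<in> sets M" for a unfolding B7_def M_def by measurable
  have sBa: "Ba a \<in> sets M" for a unfolding Ba_def using sB2 sB3 sBq sB6 sB7 by auto
  have sF: "F x \<in> sets M" for x unfolding F_def using sBa sB1 by auto
  have fIx: "finite Ix" unfolding Ix_def by auto
  have sBad: "Bad \<in> sets M" unfolding Bad_def using sF fIx by auto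
  have sA: "A \<in> sets M" unfolding A_def using sBad by auto
  have et2: "ennreal (2 * exp (- t\<^sup>2 / 2)) = ennreal (2 * \<epsilon>)" using et by simp
  have mB1: "measure M (B1 a c) \<le> 2 * \<epsilon>" if ac: "a < p" "c < p" "c \<noteq> a" "c \<noteq> \<pi> a" for a c
  proof (rule meas_le)
    show "0 \<le> 2 * \<epsilon>" using eps0 by simp
    have pa: "\<pi> a < p" "\<pi> a \<noteq> a" using \<pi>[OF ac(1)] by auto
    have "emeasure M (B1 a c) \<le> ennreal (2 * exp (- t\<^sup>2 / 2))"
      unfolding B1_def M_def
    proof (rule lin_pair[OF fR fC _ _ _ t0, where W = "\<lambda>i \<omega>. Xdat L grp \<gamma> K \<omega> i c"])
      show "K + a \<in> {..<K + p}" "K + \<pi> a \<in> {..<K + p}" "K + a \<noteq> K + \<pi> a" using ac pa by auto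
      show "(\<lambda>\<omega>. Xdat L grp \<gamma> K \<omega> i c) \<in> borel_measurable (GM ({..<n} \<times> {..<K + p}))" for i
        by measurable
    next
      fix i and \<omega> \<omega>' :: "nat \<times> nat \<Rightarrow> real"
      assume i: "i \<in> {..<n}" and ag: "\<And>i' j. i' \<in> {..<n} \<Longrightarrow> j \<in> {..<K + p} \<Longrightarrow> j \<noteq> K + a \<Longrightarrow> j \<noteq> K + \<pi> a \<Longrightarrow> \<omega> (i', j) = \<omega>' (i', j)"
      have e1: "\<omega> (i, j) = \<omega>' (i, j)" if "j < K" for j using that i ag[of i j] by auto
      have e2: "\<omega> (i, K + c) = \<omega>' (i, K + c)" using i ag[of i "K + c"] ac by auto
      show "Xdat L grp \<gamma> K \<omega> i c = Xdat L grp \<gamma> K \<omega>' i c"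
        unfolding Xdat_def using e1 e2 by simp
    qed
    then show "emeasure M (B1 a c) \<le> ennreal (2 * \<epsilon>)" using et2 by simp
  qed
  have mB2: "measure M (B2 a) \<le> 2 * \<epsilon>" if a: "a < p" for a
  proof (rule meas_le)
    show "0 \<le> 2 * \<epsilon>" using eps0 by simp
    have pa: "\<pi> a < p" "\<pi> a \<noteq> a" using \<pi>[OF a] by auto
    have "emeasure M (B2 a) \<le> ennreal (2 * exp (- t\<^sup>2 / 2))"
      unfolding B2_def M_def
    proof (rule lin_pair[OF fR fC _ _ _ t0, where W = "\<lambda>i \<omega>. Zl L K \<omega> i (grp a)"])
      show "K + a \<in> {..<K + p}" "K + \<pi> a \<in> {..<K + p}" "K + a \<noteq> K + \<pi> a" using a pa by auto
      show "(\<lambda>\<omega>. Zl L K \<omega> i (grp a)) \<in> borel_measurable (GM ({..<n} \<times> {..<K + p}))" for i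
        by measurable
    next
      fix i and \<omega> \<omega>' :: "nat \<times> nat \<Rightarrow> real"
      assume i: "i \<in> {..<n}" and ag: "\<And>i' j. i' \<in> {..<n} \<Longrightarrow> j \<in> {..<K + p} \<Longrightarrow> j \<noteq> K + a \<Longrightarrow> j \<noteq> K + \<pi> a \<Longrightarrow> \<omega> (i', j) = \<omega>' (i', j)"
      have e1: "\<omega> (i, j) = \<omega>' (i, j)" if "j < K" for j using that i ag[of i j] by auto
      show "Zl L K \<omega> i (grp a) = Zl L K \<omega>' i (grp a)"
        unfolding Zl_def using e1 by simp
    qed
    then show "emeasure M (B2 a) \<le> ennreal (2 * \<epsilon>)" using et2 by simp
  qed
  have mB3: "measure M (B3 a) \<le> 2 * \<epsilon>" if a: "a < p" for a
  proof (rule meas_le)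
    show "0 \<le> 2 * \<epsilon>" using eps0 by simp
    have pa: "\<pi> a < p" "\<pi> a \<noteq> a" using \<pi>[OF a] by auto
    have "emeasure M (B3 a) \<le> ennreal (2 * exp (- t\<^sup>2 / 2))"
      unfolding B3_def M_def
    proof (rule lin_single[OF fR fC _ t0, where W = "\<lambda>i \<omega>. \<omega> (i, K + a)"])
      show "K + \<pi> a \<in> {..<K + p}" using pa by auto
      show "(\<lambda>\<omega>. \<omega> (i, K + a)) \<in> borel_measurable (GM ({..<n} \<times> {..<K + p}))" for i
        by measurable
    next
      fix i and \<omega> \<omega>' :: "nat \<times> nat \<Rightarrow> real"
      assume i: "i \<in> {..<n}" and ag: "\<And>i' j. i' \<in> {..<n} \<Longrightarrow> j \<in> {..<K + p} \<Longrightarrow> j \<noteq> K + \<pi> a \<Longrightarrow> \<omega> (i', j) = \<omega>' (i', j)"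
      show "\<omega> (i, K + a) = \<omega>' (i, K + a)" using i ag[of i "K + a"] a pa by auto
    qed
    then show "emeasure M (B3 a) \<le> ennreal (2 * \<epsilon>)" using et2 by simp
  qed
  have mBq: "measure M (Bq k g c) \<le> \<epsilon>" for k g c
  proof (rule meas_le[OF _ eps0])
    have "emeasure M (Bq k g c) \<le> ennreal (exp (- real (card {..<n}) / 2))"
      unfolding Bq_def M_def by (rule quad_tail[OF fR fC])
    also have "\<dots> \<le> ennreal \<epsilon>" using en' by (rule ennreal_leI)
    finally show "emeasure M (Bq k g c) \<le> ennreal \<epsilon>" .
  qed
  have mB6: "measure M (B6 a) \<le> \<epsilon>" if a: "a < p" for a
  proof (rule meas_le[OF _ eps0])
    have "emeasure M (B6 a) \<le> ennreal (exp (- \<delta>\<^sup>2 / 16 * real (card {..<n})))"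
      unfolding B6_def M_def by (rule chisq_upper[OF fR fC _ d01]) (use a in simp)
    then show "emeasure M (B6 a) \<le> ennreal \<epsilon>" using ed' by simp
  qed
  have mB7: "measure M (B7 a) \<le> \<epsilon>" if a: "a < p" for a
  proof (rule meas_le[OF _ eps0])
    have "emeasure M (B7 a) \<le> ennreal (exp (- \<delta>\<^sup>2 / 16 * real (card {..<n})))"
      unfolding B7_def M_def by (rule chisq_lower[OF fR fC _ d01]) (use a in simp)
    then show "emeasure M (B7 a) \<le> ennreal \<epsilon>" using ed' by simp
  qed
  have mBa: "measure M (Ba a) \<le> 8 * \<epsilon>" if a: "a < p" for a
  proof -
    have "measure M (Ba a) \<le> 2 * \<epsilon> + 2 * \<epsilon> + \<epsilon> + \<epsilon> + \<epsilon> + \<epsilon>"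
      unfolding Ba_def
      by (intro un_le sB2 sB3 sBq sB6 sB7 sets.Un mB2 mB3 mBq mB6 mB7 a)
    then show ?thesis by simp
  qed
  have mF: "measure M (F x) \<le> 8 * \<epsilon>" if x: "x \<in> Ix" for x
  proof (cases "snd x = fst x")
    case True
    then show ?thesis using mBa[of "fst x"] x unfolding F_def Ix_def by auto
  next
    case False
    have "measure M (B1 (fst x) (snd x)) \<le> 2 * \<epsilon>"
      by (rule mB1) (use x False in \<open>auto simp: Ix_def\<close>)
    then show ?thesis using False eps0 unfolding F_def by simp
  qed
  interpret P: prob_space M by (rule psM)
  have "measure M Bad \<le> (\<Sum>x\<in>Ix. measure M (F x))"
    unfolding Bad_def by (rule P.finite_measure_subadditive_finite[OF fIx]) (use sF in auto)
  also have "\<dots> \<le> (\<Sum>x\<in>Ix. 8 * \<epsilon>)" by (rule sum_mono) (rule mF)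
  also have "\<dots> = real (card Ix) * (8 * \<epsilon>)" by simp
  also have "\<dots> \<le> real (p * p) * (8 * \<epsilon>)"
  proof -
    have "card Ix \<le> card ({..<p} \<times> {..<p})" unfolding Ix_def by (rule card_mono) auto
    then have "card Ix \<le> p * p" by simp
    then have "real (card Ix) \<le> real (p * p)" by (simp only: of_nat_le_iff)
    then show ?thesis using eps0 by (intro mult_right_mono) simp_all
  qed
  also have "\<dots> = 8 / real p" using p2 by (simp add: \<epsilon>_def power3_eq_cube)
  finally have mBad: "measure M Bad \<le> 8 / real p" .
  have mA: "measure M A \<ge> 1 - 10 / real p"
  proof -
    have "measure M A = 1 - measure M Bad" unfolding A_def by (rule P.prob_compl[OF sBad])
    moreover have "8 / real p \<le> 10 / real p" using p2 by (simp add: divide_right_mono)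
    ultimately show ?thesis using mBad by linarith
  qed
  have good: "\<forall>\<omega>\<in>A. \<forall>ne. is_ne n p (Xdat L grp \<gamma> K \<omega>) ne \<longrightarrow>
           (let X = Xdat L grp \<gamma> K \<omega>;
                D = (\<lambda>a. Gamma_check n X ne a - \<gamma> (grp a));
                Dinf = mat_sup p (\<lambda>a b. if a = b then D a else 0);
                Ginf = mat_sup p (\<lambda>a b. if a = b then \<gamma> (grp a) else 0);
                Sinf = mat_sup p (Sigma_mat grp C \<gamma>)
            in diag_V p D \<le> 2 * Dinf \<and>
               2 * Dinf \<le> 80 * sqrt Ginf * sqrt Sinf * sqrt (ln (real p) / real n))"
  proof (intro ballI allI impI)
    fix \<omega> ne assume \<omega>A: "\<omega> \<in> A" and isne: "is_ne n p (Xdat L grp \<gamma> K \<omega>) ne"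
    have \<omega>s: "\<omega> \<in> space M" and nBad: "\<omega> \<notin> Bad" using \<omega>A unfolding A_def by auto
    have nBa: "\<omega> \<notin> Ba a" if "a < p" for a
    proof -
      have "(a, a) \<in> Ix" using that \<pi>[OF that] unfolding Ix_def by auto
      then have "\<omega> \<notin> F (a, a)" using nBad unfolding Bad_def by blast
      then show ?thesis unfolding F_def by simp
    qed
    have nB1: "\<omega> \<notin> B1 a c" if "a < p" "c < p" "c \<noteq> a" "c \<noteq> \<pi> a" for a c
    proof -
      have "(a, c) \<in> Ix" using that unfolding Ix_def by auto
      then have "\<omega> \<notin> F (a, c)" using nBad unfolding Bad_def by blast
      then show ?thesis using that unfolding F_def by simp
    qed
    define X where "X = Xdat L grp \<gamma> K \<omega>"
    define D where "D a = Gamma_check n X ne a - \<gamma> (grp a)" for a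
    define Ginf where "Ginf = mat_sup p (\<lambda>a b. if a = b then \<gamma> (grp a) else 0)"
    define Sinf where "Sinf = mat_sup p (Sigma_mat grp C \<gamma>)"
    have p0: "0 < p" using p2 by simp
    have Gi0: "Ginf \<ge> 0" unfolding Ginf_def using mat_sup_ge[OF p0 p0] by (rule order_trans[rotated]) simp
    have Si0: "Sinf \<ge> 0" unfolding Sinf_def using mat_sup_ge[OF p0 p0] by (rule order_trans[rotated]) simp
    define Bd where "Bd = 35 * sqrt Ginf * sqrt Sinf * sqrt (lp / real n)"
    have Bd0: "Bd \<ge> 0" unfolding Bd_def using Gi0 Si0 l0 by simp
    have Da: "\<bar>D a\<bar> \<le> Bd" if a: "a < p" for a
    proof -
      have pa: "\<pi> a < p" "\<pi> a \<noteq> a" "grp (\<pi> a) = grp a" using \<pi>[OF a] by auto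
      have ka: "grp a < K" using grpK a by auto
      have nBaa: "\<omega> \<notin> Ba a" by (rule nBa[OF a])
      show ?thesis unfolding D_def Bd_def X_def
      proof (rule det_a[OF a pa])
        show "\<gamma> (grp a) > 0" using gpos ka by auto
        show "C (grp a) (grp a) = (\<Sum>j<K. L (grp a) j * L (grp a) j)" using CL ka by auto
        show "lp \<ge> 0" using l0 by simp
        show "n > 0" by (rule n0)
        show "\<bar>\<Sum>i<n. (\<omega> (i, K + a) - \<omega> (i, K + \<pi> a)) * Xdat L grp \<gamma> K \<omega> i c\<bar>
            \<le> sqrt (6 * lp) * sqrt (2 * (\<Sum>i<n. (Xdat L grp \<gamma> K \<omega> i c)\<^sup>2))"
          if "c < p" "c \<noteq> a" "c \<noteq> \<pi> a" for c
          using nB1[OF a that] \<omega>s unfolding B1_def t_def by auto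
        show "\<bar>\<Sum>i<n. (\<omega> (i, K + a) - \<omega> (i, K + \<pi> a)) * Zl L K \<omega> i (grp a)\<bar>
            \<le> sqrt (6 * lp) * sqrt (2 * (\<Sum>i<n. (Zl L K \<omega> i (grp a))\<^sup>2))"
          using nBaa \<omega>s unfolding Ba_def B2_def t_def by auto
        show "\<bar>\<Sum>i<n. \<omega> (i, K + \<pi> a) * \<omega> (i, K + a)\<bar> \<le> sqrt (6 * lp) * sqrt (\<Sum>i<n. (\<omega> (i, K + a))\<^sup>2)"
          using nBaa \<omega>s unfolding Ba_def B3_def t_def by auto
        show "(\<Sum>i<n. (Xdat L grp \<gamma> K \<omega> i c)\<^sup>2) \<le> 4 * real n * Sinf" if c: "c < p" for c
        proof -
          have kc: "grp c < K" using grpK c by auto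
          have gc: "\<gamma> (grp c) > 0" using gpos kc by auto
          have "\<omega> \<notin> Bq (grp c) (\<gamma> (grp c)) c" using nBa[OF c] unfolding Ba_def by auto
          then have h: "(\<Sum>i<n. (\<Sum>j<K + p. acol L (\<gamma> (grp c)) K (grp c) c j * \<omega> (i, j))\<^sup>2)
              \<le> 4 * real n * (\<Sum>j<K + p. (acol L (\<gamma> (grp c)) K (grp c) c j)\<^sup>2)"
            using \<omega>s unfolding Bq_def by auto
          have e1: "(\<Sum>j<K + p. acol L (\<gamma> (grp c)) K (grp c) c j * \<omega> (i, j)) = Xdat L grp \<gamma> K \<omega> i c" for i
            unfolding acol_lin using c by (simp add: Xdat_def)
          have e2: "(\<Sum>j<K + p. (acol L (\<gamma> (grp c)) K (grp c) c j)\<^sup>2) = Sigma_mat grp C \<gamma> c c"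
            unfolding acol_sq[OF c] using gc CL kc by (simp add: Sigma_mat_def)
          have "Sigma_mat grp C \<gamma> c c \<le> Sinf"
            unfolding Sinf_def using mat_sup_ge[OF c c, of "Sigma_mat grp C \<gamma>"] by simp
          then have "4 * real n * Sigma_mat grp C \<gamma> c c \<le> 4 * real n * Sinf" by (simp add: mult_left_mono)
          then show ?thesis using h unfolding e1 e2 by linarith
        qed
        show "(\<Sum>i<n. (Zl L K \<omega> i (grp a))\<^sup>2) \<le> 4 * real n * C (grp a) (grp a)"
        proof -
          have "\<omega> \<notin> Bq (grp a) 0 0" using nBaa unfolding Ba_def by auto
          then have h: "(\<Sum>i<n. (\<Sum>j<K + p. acol L 0 K (grp a) 0 j * \<omega> (i, j))\<^sup>2)
              \<le> 4 * real n * (\<Sum>j<K + p. (acol L 0 K (grp a) 0 j)\<^sup>2)"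
            using \<omega>s unfolding Bq_def by auto
          have e1: "(\<Sum>j<K + p. acol L 0 K (grp a) 0 j * \<omega> (i, j)) = Zl L K \<omega> i (grp a)" for i
            unfolding acol_lin by (simp add: Zl_def)
          have e2: "(\<Sum>j<K + p. (acol L 0 K (grp a) 0 j)\<^sup>2) = C (grp a) (grp a)"
            unfolding acol_sq[OF p0] using CL ka by simp
          show ?thesis using h unfolding e1 e2 .
        qed
        have h6: "(\<Sum>i<n. (\<omega> (i, K + a))\<^sup>2) \<le> real n * (1 + \<delta>)"
          using nBaa \<omega>s unfolding Ba_def B6_def by auto
        have h7: "real n * (1 - \<delta>) \<le> (\<Sum>i<n. (\<omega> (i, K + a))\<^sup>2)"
          using nBaa \<omega>s unfolding Ba_def B7_def by auto
        show "\<bar>(\<Sum>i<n. (\<omega> (i, K + a))\<^sup>2) - real n\<bar> \<le> real n * sqrt (48 * lp / real n)"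
          using h6 h7 unfolding \<delta>_def by (simp add: algebra_simps abs_le_iff)
        show "(\<Sum>i<n. (\<omega> (i, K + a))\<^sup>2) \<le> 2 * real n"
        proof -
          have "real n * (1 + \<delta>) \<le> real n * 2" using d01 by (intro mult_left_mono) auto
          then show ?thesis using h6 by linarith
        qed
        show "is_ne n p (Xdat L grp \<gamma> K \<omega>) ne" by (rule isne)
        show "C (grp a) (grp a) + \<gamma> (grp a) \<le> Sinf"
          unfolding Sinf_def using mat_sup_ge[OF a a, of "Sigma_mat grp C \<gamma>"] by (simp add: Sigma_mat_def)
        show "\<gamma> (grp a) \<le> Ginf"
          unfolding Ginf_def using mat_sup_ge[OF a a, of "\<lambda>a b. if a = b then \<gamma> (grp a) else 0"] by simp
      qed
    qed
    have Dinf: "mat_sup p (\<lambda>a b. if a = b then D a else 0) \<le> Bd"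
      by (rule mat_sup_le[OF p0]) (use Da Bd0 in auto)
    have "2 * mat_sup p (\<lambda>a b. if a = b then D a else 0) \<le> 80 * sqrt Ginf * sqrt Sinf * sqrt (lp / real n)"
      using Dinf Bd0 unfolding Bd_def by linarith
    then show "let X = Xdat L grp \<gamma> K \<omega>;
                D = (\<lambda>a. Gamma_check n X ne a - \<gamma> (grp a));
                Dinf = mat_sup p (\<lambda>a b. if a = b then D a else 0);
                Ginf = mat_sup p (\<lambda>a b. if a = b then \<gamma> (grp a) else 0);
                Sinf = mat_sup p (Sigma_mat grp C \<gamma>)
            in diag_V p D \<le> 2 * Dinf \<and>
               2 * Dinf \<le> 80 * sqrt Ginf * sqrt Sinf * sqrt (ln (real p) / real n)"
      using diag_V_le[OF p0, of D]
      unfolding Let_def X_def[symmetric] D_def[symmetric, abs_def] Ginf_def[symmetric] Sinf_def[symmetric] lp_def[symmetric]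
      by simp
  qed
  show ?thesis unfolding DS using sA mA good by blast
qed

theorem mainTheorem19:
  "\<exists>c1>0. \<exists>c2>0. \<exists>c3>0. \<forall>(n::nat) (p::nat) (K::nat) (grp::nat \<Rightarrow> nat) (\<gamma>::nat \<Rightarrow> real)
      (C::nat \<Rightarrow> nat \<Rightarrow> real) (L::nat \<Rightarrow> nat \<Rightarrow> real).
     0 < K \<longrightarrow>
     (\<forall>a<p. grp a < K) \<longrightarrow>
     (\<forall>k<K. 2 \<le> card {a. a < p \<and> grp a = k}) \<longrightarrow>
     (\<forall>k<K. 0 < \<gamma> k) \<longrightarrow>
     (\<forall>k<K. \<forall>l<K. C k l = (\<Sum>j<K. L k j * L l j)) \<longrightarrow>
     ln (real p) \<le> c1 * real n \<longrightarrow>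
     (\<exists>A \<in> sets (data_space n K p).
        measure (data_space n K p) A \<ge> 1 - c3 / real p \<and>
        (\<forall>\<omega>\<in>A. \<forall>ne. is_ne n p (Xdat L grp \<gamma> K \<omega>) ne \<longrightarrow>
           (let X = Xdat L grp \<gamma> K \<omega>;
                D = (\<lambda>a. Gamma_check n X ne a - \<gamma> (grp a));
                Dinf = mat_sup p (\<lambda>a b. if a = b then D a else 0);
                Ginf = mat_sup p (\<lambda>a b. if a = b then \<gamma> (grp a) else 0);
                Sinf = mat_sup p (Sigma_mat grp C \<gamma>)
            in diag_V p D \<le> 2 * Dinf \<and>
               2 * Dinf \<le> c2 * sqrt Ginf * sqrt Sinf * sqrt (ln (real p) / real n))))"
  apply (rule exI[of _ "1/48"], rule conjI, simp)
  apply (rule exI[of _ 80], rule conjI, simp)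
  apply (rule exI[of _ 10], rule conjI, simp)
  apply (intro allI impI)
  apply (rule main_lemma)
       apply assumption+
  done

end
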